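(* For $n\ge0$ let $\alpha_n$ be the finite knock sequence $1^{2^n},2^{2^n},\dots,d^{2^n}$ (knock $2^n$ consecutive times on door $1$, then $2^n$ times on door $2$, ..., then $2^n$ times on door $d$). If all doors of a configuration $\mathcal{C}$ of $d$ doors have the same fundamental distribution, then $$\mathbb{T}_{\mathcal{C}}(\alpha_0\cdot\alpha_1\cdot\alpha_2\cdots)=\Theta(\mathbb{T}_{\mathcal{C}}),$$ with universal constants.
   Context: Dependent doors model. Fix an integer $d\ge 2$ and doors $1,\dots,d$, all initially closed; once a door opens it stays open forever. A configuration $\mathcal{C}$ specifies for each door $i$ a function $\phi_i^{\mathcal{C}}$ mapping every finite nonempty sequence $(X_1,\dots,X_n)$ of subsets of $\{1,\dots,i-1\}$ to $[0,1]$: $\phi_i^{\mathcal{C}}(X_1,\dots,X_n)$ is the probability that door $i$ has opened during $n$ knocks on it, where $X_j$ is the set of open doors among $\{1,\dots,i-1\}$ at the time of the $j$-th knock on door $i$ (so a closed door $i$ opens at its $n$-th knock with conditional probability $(\phi_i(X_1..X_n)-\phi_i(X_1..X_{n-1}))/(1-\phi_i(X_1..X_{n-1}))$, with $\phi_i$ of the empty sequence equal to $0$). Configurations are assumed monotone ($\phi_i(X')\le\phi_i(X)$ whenever $X'$ is a, not necessarily consecutive, subsequence of $X$) and positively correlated ($\phi_i(X'_1,\dots,X'_n)\le\phi_i(X_1,\dots,X_n)$ whenever $X'_j\subseteq X_j$ for all $j$). The fundamental distribution of door $i$ is $p_i(n)=1-\phi_i(\{1,\dots,i-1\}^n)$ ($p_i(0)=1$),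 and $E_i=\sum_{n\ge0}p_i(n)$ is assumed finite. A knock sequence $\pi$ is an infinite sequence of door indices, executed in order without any feedback; $\mathbb{T}_{\mathcal{C}}(\pi)$ is the expected number of knocks until all $d$ doors are open, and $\mathbb{T}_{\mathcal{C}}=\inf_\pi \mathbb{T}_{\mathcal{C}}(\pi)$. *)

theory Defs
  imports "HOL-Probability.Probability" "HOL-Library.Sublist"
begin

text \<open>Doors are the naturals 1..d. A configuration is
  given by phi :: nat => nat set list => real, where phi i Xs is the probability
  that door i has opened during the knocks on it, Xs listing the sets of open
  doors among 1..i-1 at the successive knocks on door i.\<close>

definition phi0 :: "(nat \<Rightarrow> nat set list \<Rightarrow> real) \<Rightarrow> nat \<Rightarrow> nat set list \<Rightarrow> real" where
  "phi0 \<phi> i Xs = (if Xs = [] then 0 else \<phi> i Xs)"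

definition adm_seq :: "nat \<Rightarrow> nat set list \<Rightarrow> bool" where
  "adm_seq i Xs \<longleftrightarrow> Xs \<noteq> [] \<and> (\<forall>X\<in>set Xs. X \<subseteq> {1..<i})"

text \<open>A monotone, positively correlated configuration of d doors.\<close>
definition configuration :: "nat \<Rightarrow> (nat \<Rightarrow> nat set list \<Rightarrow> real) \<Rightarrow> bool" where
  "configuration d \<phi> \<longleftrightarrow>
     (\<forall>i\<in>{1..d}.
        (\<forall>Xs. adm_seq i Xs \<longrightarrow> 0 \<le> \<phi> i Xs \<and> \<phi> i Xs \<le> 1) \<and>
        (\<forall>Xs Ys. adm_seq i Xs \<longrightarrow> adm_seq i Ys \<longrightarrow> subseq Ys Xs \<longrightarrow> \<phi> i Ys \<le> \<phi> i Xs) \<and>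
        (\<forall>Xs Ys. adm_seq i Xs \<longrightarrow> adm_seq i Ys \<longrightarrow> list_all2 (\<subseteq>) Ys Xs \<longrightarrow> \<phi> i Ys \<le> \<phi> i Xs))"

definition fund :: "(nat \<Rightarrow> nat set list \<Rightarrow> real) \<Rightarrow> nat \<Rightarrow> nat \<Rightarrow> real" where
  "fund \<phi> i n = 1 - phi0 \<phi> i (replicate n {1..<i})"

text \<open>Distribution of the history [O_0, ..., O_t] of open-door sets after t knocks
  of the knock sequence pi (O_s = set of open doors just before knock s, knocks indexed from 0).\<close>
primrec hist :: "(nat \<Rightarrow> nat set list \<Rightarrow> real) \<Rightarrow> (nat \<Rightarrow> nat) \<Rightarrow> nat \<Rightarrow> nat set list pmf" where
  "hist \<phi> \<pi> 0 = return_pmf [{}]"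
| "hist \<phi> \<pi> (Suc t) = bind_pmf (hist \<phi> \<pi> t) (\<lambda>h.
     let Op = last h; i = \<pi> t in
     if i \<in> Op then return_pmf (h @ [Op])
     else
       let Xs = [h ! s \<inter> {1..<i}. s \<leftarrow> [0..<Suc t], \<pi> s = i];
           prev = butlast Xs;
           q = (\<phi> i Xs - phi0 \<phi> i prev) / (1 - phi0 \<phi> i prev)
       in map_pmf (\<lambda>b. h @ [if b then insert i Op else Op]) (bernoulli_pmf q))"

text \<open>Expected number of knocks until all d doors are open: sum over t of
  P(not all doors open after t knocks).\<close>
definition Tseq :: "nat \<Rightarrow> (nat \<Rightarrow> nat set list \<Rightarrow> real) \<Rightarrow> (nat \<Rightarrow> nat) \<Rightarrow> ennreal" where
  "Tseq d \<phi> \<pi> = (\<Sum>t. ennreal (measure_pmf.prob (hist \<phi> \<pi> t) {h. \<not> {1..d} \<subseteq> last h}))"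

definition knock_seqs :: "nat \<Rightarrow> (nat \<Rightarrow> nat) set" where
  "knock_seqs d = {\<pi>. \<forall>t. \<pi> t \<in> {1..d}}"

definition Topt :: "nat \<Rightarrow> (nat \<Rightarrow> nat set list \<Rightarrow> real) \<Rightarrow> ennreal" where
  "Topt d \<phi> = (INF \<pi> \<in> knock_seqs d. Tseq d \<phi> \<pi>)"

definition alpha_block :: "nat \<Rightarrow> nat \<Rightarrow> nat list" where
  "alpha_block d n = concat (map (\<lambda>i. replicate (2^n) i) [1..<Suc d])"

function alpha_from :: "nat \<Rightarrow> nat \<Rightarrow> nat \<Rightarrow> nat" where
  "alpha_from d n t =
     (if d = 0 then 1
      else if t < length (alpha_block d n) then alpha_block d n ! t
      else alpha_from d (Suc n) (t - length (alpha_block d n)))"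
  by pat_completeness auto
termination
proof (relation "Wellfounded.measure (\<lambda>(d, n, t). t)")
  fix d n t
  assume "d \<noteq> 0" "\<not> t < length (alpha_block d n)"
  moreover have "length (alpha_block d n) = d * 2^n"
    by (simp add: alpha_block_def length_concat comp_def sum_list_triv)
  ultimately show "((d, Suc n, t - length (alpha_block d n)), d, n, t) \<in> Wellfounded.measure (\<lambda>(d, n, t). t)"
  proof -
    have p: "0 < d * 2^n" using \<open>d \<noteq> 0\<close> by simp
    then have "0 < t" using \<open>\<not> t < length (alpha_block d n)\<close> \<open>length (alpha_block d n) = d * 2^n\<close> by linarith
    then show ?thesis using p \<open>length (alpha_block d n) = d * 2^n\<close> by simp
  qed
qed auto

definition alpha :: "nat \<Rightarrow> nat \<Rightarrow> nat" where
  "alpha d = alpha_from d 0"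

end

theory Submission
  imports Defs
begin


definition hstep :: "(nat \<Rightarrow> nat set list \<Rightarrow> real) \<Rightarrow> (nat \<Rightarrow> nat) \<Rightarrow> nat \<Rightarrow> nat set list \<Rightarrow> nat set list pmf" where
  "hstep \<phi> \<pi> t h = (let Op = last h; i = \<pi> t in
     if i \<in> Op then return_pmf (h @ [Op])
     else
       let Xs = [h ! s \<inter> {1..<i}. s \<leftarrow> [0..<Suc t], \<pi> s = i];
           prev = butlast Xs;
           q = (\<phi> i Xs - phi0 \<phi> i prev) / (1 - phi0 \<phi> i prev)
       in map_pmf (\<lambda>b. h @ [if b then insert i Op else Op]) (bernoulli_pmf q))"

lemma hist_Suc': "hist \<phi> \<pi> (Suc t) = bind_pmf (hist \<phi> \<pi> t) (hstep \<phi> \<pi> t)"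
  by (simp add: hstep_def[abs_def])

definition kseq :: "(nat \<Rightarrow> nat) \<Rightarrow> nat \<Rightarrow> nat set list \<Rightarrow> nat \<Rightarrow> nat set list" where
  "kseq \<pi> i h t = [h ! s \<inter> {1..<i}. s \<leftarrow> [0..<t], \<pi> s = i]"

definition qv :: "(nat \<Rightarrow> nat set list \<Rightarrow> real) \<Rightarrow> (nat \<Rightarrow> nat) \<Rightarrow> nat \<Rightarrow> nat set list \<Rightarrow> real" where
  "qv \<phi> \<pi> t h = (\<phi> (\<pi> t) (kseq \<pi> (\<pi> t) h t @ [h ! t \<inter> {1..<\<pi> t}]) - phi0 \<phi> (\<pi> t) (kseq \<pi> (\<pi> t) h t))
      / (1 - phi0 \<phi> (\<pi> t) (kseq \<pi> (\<pi> t) h t))"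

lemma kseq_Suc: "kseq \<pi> i h (Suc t) = kseq \<pi> i h t @ (if \<pi> t = i then [h ! t \<inter> {1..<i}] else [])"
  by (simp add: kseq_def)

lemma kseq_0[simp]: "kseq \<pi> i h 0 = []"
  by (simp add: kseq_def)

lemma kseq_append: "t \<le> length h \<Longrightarrow> kseq \<pi> i (h @ xs) t = kseq \<pi> i h t"
  by (induction t) (auto simp: kseq_Suc nth_append)

lemma hstep_open: "\<pi> t \<in> last h \<Longrightarrow> hstep \<phi> \<pi> t h = return_pmf (h @ [last h])"
  by (simp add: hstep_def)

lemma hstep_closed: "\<pi> t \<notin> last h \<Longrightarrow> length h = Suc t \<Longrightarrow>
   hstep \<phi> \<pi> t h = map_pmf (\<lambda>b. h @ [if b then insert (\<pi> t) (last h) else last h]) (bernoulli_pmf (qv \<phi> \<pi> t h))"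
proof -
  assume a: "\<pi> t \<notin> last h" "length h = Suc t"
  have e: "[h ! s \<inter> {1..<\<pi> t}. s \<leftarrow> [0..<Suc t], \<pi> s = \<pi> t] = kseq \<pi> (\<pi> t) h t @ [h ! t \<inter> {1..<\<pi> t}]"
    using kseq_Suc[of \<pi> "\<pi> t" h t] by (simp add: kseq_def)
  show ?thesis using a unfolding hstep_def Let_def e qv_def by simp
qed

lemma hstep_support: "h' \<in> set_pmf (hstep \<phi> \<pi> t h) \<Longrightarrow> \<exists>x. h' = h @ [x] \<and> last h \<subseteq> x \<and> x \<subseteq> insert (\<pi> t) (last h)"
  by (auto simp: hstep_def Let_def split: if_splits)

definition hinv :: "(nat \<Rightarrow> nat) \<Rightarrow> nat \<Rightarrow> nat set list \<Rightarrow> bool" where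
  "hinv \<pi> t h \<longleftrightarrow> length h = Suc t \<and> h ! 0 = {} \<and> (\<forall>s<t. h ! s \<subseteq> h ! Suc s \<and> h ! Suc s \<subseteq> insert (\<pi> s) (h ! s))"

lemma hist_hinv: "h \<in> set_pmf (hist \<phi> \<pi> t) \<Longrightarrow> hinv \<pi> t h"
proof (induction t arbitrary: h)
  case 0
  then show ?case by (simp add: hinv_def)
next
  case (Suc t)
  from Suc.prems obtain g where g: "g \<in> set_pmf (hist \<phi> \<pi> t)" "h \<in> set_pmf (hstep \<phi> \<pi> t g)"
    unfolding hist_Suc' by auto
  from Suc.IH[OF g(1)] have ig: "hinv \<pi> t g" .
  from hstep_support[OF g(2)] obtain x where x: "h = g @ [x]" "last g \<subseteq> x" "x \<subseteq> insert (\<pi> t) (last g)" by blast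
  have lg: "length g = Suc t" using ig by (simp add: hinv_def)
  have "g \<noteq> []" using lg by auto
  then have lastg: "last g = g ! t" using lg by (simp add: last_conv_nth)
  have A: "length h = Suc (Suc t)" using x lg by simp
  have B: "h ! 0 = {}" using x lg ig by (simp add: hinv_def nth_append)
  have C: "\<forall>s<Suc t. h ! s \<subseteq> h ! Suc s \<and> h ! Suc s \<subseteq> insert (\<pi> s) (h ! s)"
  proof (intro allI impI)
    fix s assume s: "s < Suc t"
    show "h ! s \<subseteq> h ! Suc s \<and> h ! Suc s \<subseteq> insert (\<pi> s) (h ! s)"
    proof (cases "s < t")
      case True
      then show ?thesis using ig x lg by (simp add: hinv_def nth_append)
    next
      case False
      then have "s = t" using s by simp
      then show ?thesis using x lg lastg by (simp add: nth_append)
    qed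
  qed
  show ?case using A B C unfolding hinv_def by blast
qed

lemma iter_le:
  assumes "\<And>t h. a \<le> t \<Longrightarrow> t < b \<Longrightarrow> h \<in> set_pmf (hist \<phi> \<pi> t) \<Longrightarrow> (\<integral>\<^sup>+h'. f (Suc t) h' \<partial>hstep \<phi> \<pi> t h) \<le> f t h"
  shows "a \<le> b \<Longrightarrow> (\<integral>\<^sup>+h. f b h \<partial>hist \<phi> \<pi> b) \<le> (\<integral>\<^sup>+h. f a h \<partial>hist \<phi> \<pi> a)"
  using assms
proof (induction b)
  case 0
  then show ?case by simp
next
  case (Suc b)
  show ?case
  proof (cases "a = Suc b")
    case True
    then show ?thesis by simp
  next
    case False
    then have ab: "a \<le> b" using Suc.prems by simp
    have "(\<integral>\<^sup>+h. f (Suc b) h \<partial>hist \<phi> \<pi> (Suc b)) = (\<integral>\<^sup>+h. (\<integral>\<^sup>+h'. f (Suc b) h' \<partial>hstep \<phi> \<pi> b h) \<partial>hist \<phi> \<pi> b)"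
      unfolding hist_Suc' by simp
    also have "\<dots> \<le> (\<integral>\<^sup>+h. f b h \<partial>hist \<phi> \<pi> b)"
      by (intro nn_integral_mono_AE) (auto simp: AE_measure_pmf_iff intro!: Suc.prems(2) ab)
    also have "\<dots> \<le> (\<integral>\<^sup>+h. f a h \<partial>hist \<phi> \<pi> a)"
      using Suc.IH[OF ab] Suc.prems by auto
    finally show ?thesis .
  qed
qed

lemma nn_mono_pmf: "(\<And>x. x \<in> set_pmf M \<Longrightarrow> f x \<le> g x) \<Longrightarrow> (\<integral>\<^sup>+x. f x \<partial>measure_pmf M) \<le> (\<integral>\<^sup>+x. g x \<partial>measure_pmf M)"
  by (intro nn_integral_mono_AE) (auto simp: AE_measure_pmf_iff)


definition okseq :: "nat \<Rightarrow> nat set list \<Rightarrow> bool" where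
  "okseq i Xs \<longleftrightarrow> (\<forall>X\<in>set Xs. X \<subseteq> {1..<i})"

lemma okseq_kseq[simp]: "okseq i (kseq \<pi> i h t)"
  by (auto simp: okseq_def kseq_def)

lemma okseq_append[simp]: "okseq i (Xs @ Ys) \<longleftrightarrow> okseq i Xs \<and> okseq i Ys"
  by (auto simp: okseq_def)

lemma okseq_replicate[simp]: "okseq i (replicate n {1..<i})"
  by (auto simp: okseq_def)

lemma okseq_Cons[simp]: "okseq i (X # Xs) \<longleftrightarrow> X \<subseteq> {1..<i} \<and> okseq i Xs"
  by (auto simp: okseq_def)

lemma okseq_Nil[simp]: "okseq i []"
  by (auto simp: okseq_def)

lemma okseq_subseq: "subseq Ys Xs \<Longrightarrow> okseq i Xs \<Longrightarrow> okseq i Ys"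
proof -
  assume a: "subseq Ys Xs" "okseq i Xs"
  show ?thesis unfolding okseq_def
  proof
    fix X assume X: "X \<in> set Ys"
    obtain Y where "Y \<in> set Xs" "X = Y" by (rule list_emb_set[OF a(1) X])
    then show "X \<subseteq> {1..<i}" using a(2) by (simp add: okseq_def)
  qed
qed

lemma adm_okseq: "Xs \<noteq> [] \<Longrightarrow> okseq i Xs \<Longrightarrow> adm_seq i Xs"
  by (simp add: adm_seq_def okseq_def)

context
  fixes d \<phi> i
  assumes cfg: "configuration d \<phi>" and di: "i \<in> {1..d}"
begin

lemma cfg_bnd: "adm_seq i Xs \<Longrightarrow> 0 \<le> \<phi> i Xs \<and> \<phi> i Xs \<le> 1"
  using cfg di unfolding configuration_def by blast

lemma cfg_sub: "adm_seq i Xs \<Longrightarrow> adm_seq i Ys \<Longrightarrow> subseq Ys Xs \<Longrightarrow> \<phi> i Ys \<le> \<phi> i Xs"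
  using cfg di unfolding configuration_def by blast

lemma cfg_cor: "adm_seq i Xs \<Longrightarrow> adm_seq i Ys \<Longrightarrow> list_all2 (\<subseteq>) Ys Xs \<Longrightarrow> \<phi> i Ys \<le> \<phi> i Xs"
  using cfg di unfolding configuration_def by blast

lemma phi0_bnd: "okseq i Xs \<Longrightarrow> 0 \<le> phi0 \<phi> i Xs \<and> phi0 \<phi> i Xs \<le> 1"
  unfolding phi0_def using cfg_bnd adm_okseq by simp

lemma phi0_subseq: "okseq i Xs \<Longrightarrow> subseq Ys Xs \<Longrightarrow> phi0 \<phi> i Ys \<le> phi0 \<phi> i Xs"
proof -
  assume a: "okseq i Xs" "subseq Ys Xs"
  show ?thesis
  proof (cases "Ys = []")
    case True
    then show ?thesis using phi0_bnd[OF a(1)] by (simp add: phi0_def)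
  next
    case False
    then have xn: "Xs \<noteq> []" using a(2) by auto
    moreover have "okseq i Ys" using okseq_subseq a by blast
    ultimately have "\<phi> i Ys \<le> \<phi> i Xs" using cfg_sub adm_okseq a False by blast
    then show ?thesis using xn False by (simp add: phi0_def)
  qed
qed

lemma phi0_corr: "okseq i Xs \<Longrightarrow> okseq i Ys \<Longrightarrow> list_all2 (\<subseteq>) Ys Xs \<Longrightarrow> phi0 \<phi> i Ys \<le> phi0 \<phi> i Xs"
proof -
  assume a: "okseq i Xs" "okseq i Ys" "list_all2 (\<subseteq>) Ys Xs"
  show ?thesis
  proof (cases "Ys = []")
    case True
    then show ?thesis using a by (simp add: phi0_def)
  next
    case False
    then have xn: "Xs \<noteq> []" using a(3) by auto
    then have "\<phi> i Ys \<le> \<phi> i Xs" using cfg_cor adm_okseq a False by blast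
    then show ?thesis using xn False by (simp add: phi0_def)
  qed
qed

lemma subseq_replicate: "n \<le> m \<Longrightarrow> subseq (replicate n x) (replicate m x)"
proof -
  assume "n \<le> m"
  then have "replicate m x = replicate n x @ replicate (m - n) x"
    by (metis le_add_diff_inverse replicate_add)
  moreover have "subseq (replicate n x) (replicate n x @ replicate (m - n) x)"
    by (rule subseq_rev_drop_many) simp
  ultimately show ?thesis by simp
qed

lemma phi0_full: "okseq i Xs \<Longrightarrow> length Xs \<le> n \<Longrightarrow> phi0 \<phi> i Xs \<le> phi0 \<phi> i (replicate n {1..<i})"
proof -
  assume a: "okseq i Xs" "length Xs \<le> n"
  have "list_all2 (\<subseteq>) Xs (replicate (length Xs) {1..<i})"
    using a(1) by (auto simp: list_all2_conv_all_nth okseq_def)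
  then have "phi0 \<phi> i Xs \<le> phi0 \<phi> i (replicate (length Xs) {1..<i})"
    by (rule phi0_corr[OF okseq_replicate a(1)])
  also have "\<dots> \<le> phi0 \<phi> i (replicate n {1..<i})"
    by (rule phi0_subseq[OF okseq_replicate subseq_replicate[OF a(2)]])
  finally show ?thesis .
qed

end


definition cnt :: "(nat \<Rightarrow> nat) \<Rightarrow> nat \<Rightarrow> nat \<Rightarrow> nat" where
  "cnt \<pi> j t = length (filter (\<lambda>s. \<pi> s = j) [0..<t])"

lemma length_kseq: "length (kseq \<pi> j h t) = cnt \<pi> j t"
  by (induction t) (auto simp: kseq_Suc cnt_def)

lemma cnt_mono: "t \<le> T \<Longrightarrow> cnt \<pi> j t \<le> cnt \<pi> j T"
proof -
  assume "t \<le> T"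
  then have "[0..<T] = [0..<t] @ [t..<T]" by (metis le0 upt_add_eq_append le_add_diff_inverse)
  then show ?thesis unfolding cnt_def by simp
qed

lemma step_alg:
  fixes f0 f1 A q :: real
  assumes "0 \<le> f0" "f0 \<le> f1" "f1 \<le> A" "A \<le> 1" "q = (f1 - f0) / (1 - f0)"
  shows "q * 1 + (1 - q) * ((A - f1) / (1 - f1)) \<le> (A - f0) / (1 - f0)"
proof (cases "f0 = 1")
  case True
  have f1: "f1 = 1" using assms True by linarith
  have "A = 1" using assms f1 by linarith
  show ?thesis using assms True f1 \<open>A = 1\<close> by simp
next
  case False
  then have f0: "f0 < 1" using assms by simp
  show ?thesis
  proof (cases "f1 = 1")
    case True
    then have "A = 1" using assms by simp
    then show ?thesis using assms True f0 by simp
  next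
    case False
    then have f1: "f1 < 1" using assms by simp
    have q1: "1 - q = (1 - f1) / (1 - f0)" using f0 assms(5) by (simp add: field_simps)
    have ne: "1 - f1 \<noteq> 0" using f1 by simp
    have q2: "(1 - q) * ((A - f1) / (1 - f1)) = (A - f1) / (1 - f0)" unfolding q1
      using ne by (simp add: times_divide_times_eq mult.commute[of "1 - f0"])
    have "q * 1 + (1 - q) * ((A - f1) / (1 - f1)) = q + (A - f1) / (1 - f0)" using q2 by simp
    also have "\<dots> = ((f1 - f0) + (A - f1)) / (1 - f0)" unfolding assms(5) by (rule add_divide_distrib[symmetric])
    also have "\<dots> = (A - f0) / (1 - f0)" by simp
    finally have "q * 1 + (1 - q) * ((A - f1) / (1 - f1)) = (A - f0) / (1 - f0)" .
    then show ?thesis by simp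
  qed
qed

lemma q_bnd:
  fixes f0 f1 :: real
  assumes "0 \<le> f0" "f0 \<le> f1" "f1 \<le> 1"
  shows "0 \<le> (f1 - f0) / (1 - f0) \<and> (f1 - f0) / (1 - f0) \<le> 1"
proof (cases "f0 = 1")
  case True then show ?thesis by simp
next
  case False
  then have "f0 < 1" using assms by simp
  then show ?thesis using assms by (simp add: field_simps)
qed

lemma ennreal_comb:
  fixes a b q :: real
  assumes "0 \<le> a" "0 \<le> b" "0 \<le> q" "q \<le> 1"
  shows "ennreal a * ennreal q + ennreal b * ennreal (1 - q) = ennreal (q * a + (1 - q) * b)"
proof -
  have "ennreal (q * a + (1 - q) * b) = ennreal (q * a) + ennreal ((1 - q) * b)"
    using assms by (intro ennreal_plus) auto
  also have "\<dots> = ennreal a * ennreal q + ennreal b * ennreal (1 - q)"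
    using assms by (simp add: ennreal_mult mult.commute)
  finally show ?thesis by simp
qed

lemma hist_len: "h \<in> set_pmf (hist \<phi> \<pi> t) \<Longrightarrow> length h = Suc t"
  using hist_hinv[of h \<phi> \<pi> t] by (simp add: hinv_def)

lemma last_len: "length h = Suc t \<Longrightarrow> last h = h ! t"
  by (cases h rule: rev_cases) auto

lemma kseq_snoc_Suc: "length h = Suc t \<Longrightarrow> kseq \<pi> j (h @ [x]) (Suc t) = kseq \<pi> j h t @ (if \<pi> t = j then [last h \<inter> {1..<j}] else [])"
  by (simp add: kseq_append kseq_Suc last_len nth_append)

context
  fixes d :: nat and \<phi> :: "nat \<Rightarrow> nat set list \<Rightarrow> real" and \<pi> :: "nat \<Rightarrow> nat" and T :: nat
  assumes cfg: "configuration d \<phi>" and pik: "\<And>t. \<pi> t \<in> {1..d}"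
begin

definition Aj :: "nat \<Rightarrow> real" where
  "Aj j = phi0 \<phi> j (replicate (cnt \<pi> j T) {1..<j})"

definition wj :: "nat \<Rightarrow> nat \<Rightarrow> nat set list \<Rightarrow> real" where
  "wj j t h = (if j \<in> last h then 1 else (Aj j - phi0 \<phi> j (kseq \<pi> j h t)) / (1 - phi0 \<phi> j (kseq \<pi> j h t)))"

lemma wj_nonneg: "j \<in> {1..d} \<Longrightarrow> t \<le> T \<Longrightarrow> 0 \<le> wj j t h"
proof -
  assume j: "j \<in> {1..d}" and t: "t \<le> T"
  have "phi0 \<phi> j (kseq \<pi> j h t) \<le> Aj j"
    unfolding Aj_def using phi0_full[OF cfg j] length_kseq cnt_mono[OF t] by simp
  moreover have "phi0 \<phi> j (kseq \<pi> j h t) \<le> 1" using phi0_bnd[OF cfg j] by simp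
  ultimately show ?thesis unfolding wj_def by (auto intro: divide_nonneg_nonneg)
qed

definition WW :: "nat \<Rightarrow> nat set list \<Rightarrow> ennreal" where
  "WW t h = ennreal (\<Prod>j\<in>{1..d}. wj j t h)"

lemma WW_step:
  assumes t: "t < T" and h: "h \<in> set_pmf (hist \<phi> \<pi> t)"
  shows "(\<integral>\<^sup>+h'. WW (Suc t) h' \<partial>hstep \<phi> \<pi> t h) \<le> WW t h"
proof -
  have lh: "length h = Suc t" using hist_len[OF h] .
  define i where "i = \<pi> t"
  have i: "i \<in> {1..d}" using pik i_def by simp
  define R where "R = (\<Prod>j\<in>{1..d} - {i}. wj j t h)"
  have Rnn: "0 \<le> R" unfolding R_def using wj_nonneg t by (auto intro!: prod_nonneg)
  have other: "\<And>x. last h \<subseteq> x \<Longrightarrow> x \<subseteq> insert i (last h) \<Longrightarrow> j \<in> {1..d} - {i} \<Longrightarrow> wj j (Suc t) (h @ [x]) = wj j t h" for j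
  proof -
    fix x assume x: "last h \<subseteq> x" "x \<subseteq> insert i (last h)" and j: "j \<in> {1..d} - {i}"
    then have "(j \<in> x) = (j \<in> last h)" by auto
    moreover have "kseq \<pi> j (h @ [x]) (Suc t) = kseq \<pi> j h t" using kseq_snoc_Suc[OF lh] j i_def by simp
    ultimately show "wj j (Suc t) (h @ [x]) = wj j t h" unfolding wj_def by simp
  qed
  have oth: "\<And>x. last h \<subseteq> x \<Longrightarrow> x \<subseteq> insert i (last h) \<Longrightarrow> (\<Prod>j\<in>{1..d} - {i}. wj j (Suc t) (h @ [x])) = R"
  proof -
    fix x assume x1: "last h \<subseteq> x" and x2: "x \<subseteq> insert i (last h)"
    show "(\<Prod>j\<in>{1..d} - {i}. wj j (Suc t) (h @ [x])) = R" unfolding R_def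
    proof (rule prod.cong[OF refl])
      fix j assume "j \<in> {1..d} - {i}"
      then show "wj j (Suc t) (h @ [x]) = wj j t h" by (rule other[OF x1 x2])
    qed
  qed
  have split: "\<And>g. (\<Prod>j\<in>{1..d}. g j) = g i * (\<Prod>j\<in>{1..d} - {i}. g j)"
    using i by (simp add: prod.remove)
  show ?thesis
  proof (cases "i \<in> last h")
    case True
    have "WW (Suc t) (h @ [last h]) = ennreal (wj i (Suc t) (h @ [last h]) * (\<Prod>j\<in>{1..d} - {i}. wj j (Suc t) (h @ [last h])))"
      unfolding WW_def using split[of "\<lambda>j. wj j (Suc t) (h @ [last h])"] by simp
    also have "\<dots> = ennreal (wj i t h * R)"
      using oth[of "last h", OF subset_refl subset_insertI] True by (simp add: wj_def)
    also have "\<dots> = WW t h" unfolding WW_def R_def using split[of "\<lambda>j. wj j t h"] by simp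
    finally show ?thesis using True unfolding i_def by (simp add: hstep_open)
  next
    case False
    define f0 where "f0 = phi0 \<phi> i (kseq \<pi> i h t)"
    define f1 where "f1 = phi0 \<phi> i (kseq \<pi> i h t @ [h ! t \<inter> {1..<i}])"
    have q: "qv \<phi> \<pi> t h = (f1 - f0) / (1 - f0)"
      unfolding qv_def f0_def f1_def i_def by (simp add: phi0_def)
    have f0: "0 \<le> f0" unfolding f0_def using phi0_bnd[OF cfg i] by simp
    have f01: "f0 \<le> f1" unfolding f0_def f1_def
      using phi0_subseq[OF cfg i] by (simp add: subseq_rev_drop_many)
    have lk: "length (kseq \<pi> i h t @ [h ! t \<inter> {1..<i}]) \<le> cnt \<pi> i T"
      using length_kseq[of \<pi> i h "Suc t"] kseq_Suc[of \<pi> i h t] cnt_mono[of "Suc t" T \<pi> i] t i_def by simp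
    have f1A: "f1 \<le> Aj i" unfolding f1_def Aj_def
      using phi0_full[OF cfg i _ lk] by simp
    have A1: "Aj i \<le> 1" using phi0_bnd[OF cfg i okseq_replicate[of i "cnt \<pi> i T"]] unfolding Aj_def by simp
    have qb: "0 \<le> qv \<phi> \<pi> t h" "qv \<phi> \<pi> t h \<le> 1" using q_bnd[OF f0 f01] f1A A1 q by auto
    define x1 where "x1 = insert i (last h)"
    define x0 where "x0 = last h"
    have x1a: "last h \<subseteq> x1" and x1b: "x1 \<subseteq> insert i (last h)" unfolding x1_def by auto
    have x0a: "last h \<subseteq> x0" and x0b: "x0 \<subseteq> insert i (last h)" unfolding x0_def by auto
    have w1: "wj i (Suc t) (h @ [x1]) = 1" unfolding wj_def x1_def by simp
    have w0: "wj i (Suc t) (h @ [x0]) = (Aj i - f1) / (1 - f1)"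
      unfolding wj_def x0_def f1_def using False kseq_snoc_Suc[OF lh, of \<pi> i] i_def lh last_len[OF lh] by simp
    have wi: "wj i t h = (Aj i - f0) / (1 - f0)" unfolding wj_def f0_def using False by simp
    have e1: "WW (Suc t) (h @ [x1]) = ennreal (1 * R)"
      unfolding WW_def using split[of "\<lambda>j. wj j (Suc t) (h @ [x1])"] w1 oth[of x1, OF x1a x1b]
      by (simp add: x1_def)
    have e0: "WW (Suc t) (h @ [x0]) = ennreal ((Aj i - f1) / (1 - f1) * R)"
      unfolding WW_def using split[of "\<lambda>j. wj j (Suc t) (h @ [x0])"] w0 oth[of x0, OF x0a x0b]
      by (simp add: x0_def)
    have w0nn: "0 \<le> (Aj i - f1) / (1 - f1)" using f1A A1 by (auto intro: divide_nonneg_nonneg)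
    have "(\<integral>\<^sup>+h'. WW (Suc t) h' \<partial>hstep \<phi> \<pi> t h)
        = WW (Suc t) (h @ [x1]) * ennreal (qv \<phi> \<pi> t h) + WW (Suc t) (h @ [x0]) * ennreal (1 - qv \<phi> \<pi> t h)"
      using False qb unfolding i_def x1_def x0_def by (simp add: hstep_closed[OF _ lh])
    also have "\<dots> = ennreal (qv \<phi> \<pi> t h * (1 * R) + (1 - qv \<phi> \<pi> t h) * ((Aj i - f1) / (1 - f1) * R))"
      unfolding e1 e0 using qb Rnn w0nn by (intro ennreal_comb mult_nonneg_nonneg) auto
    also have "\<dots> = ennreal ((qv \<phi> \<pi> t h * 1 + (1 - qv \<phi> \<pi> t h) * ((Aj i - f1) / (1 - f1))) * R)"
      by (simp add: algebra_simps)
    also have "\<dots> \<le> ennreal ((Aj i - f0) / (1 - f0) * R)"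
      using step_alg[OF f0 f01 f1A A1 q] Rnn by (intro ennreal_leI mult_right_mono) auto
    also have "\<dots> = WW t h" unfolding WW_def R_def using split[of "\<lambda>j. wj j t h"] wi by simp
    finally show ?thesis .
  qed
qed

lemma WW_0: "WW 0 [{}] = ennreal (\<Prod>j\<in>{1..d}. Aj j)"
  unfolding WW_def wj_def by (simp add: phi0_def)

lemma all_open_bound:
  "emeasure (measure_pmf (hist \<phi> \<pi> T)) {h. {1..d} \<subseteq> last h} \<le> ennreal (\<Prod>j\<in>{1..d}. Aj j)"
proof -
  have "emeasure (measure_pmf (hist \<phi> \<pi> T)) {h. {1..d} \<subseteq> last h}
      = (\<integral>\<^sup>+h. indicator {h. {1..d} \<subseteq> last h} h \<partial>hist \<phi> \<pi> T)"
    by (simp add: nn_integral_indicator)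
  also have "\<dots> \<le> (\<integral>\<^sup>+h. WW T h \<partial>hist \<phi> \<pi> T)"
  proof (rule nn_mono_pmf)
    fix h assume "h \<in> set_pmf (hist \<phi> \<pi> T)"
    show "indicator {h. {1..d} \<subseteq> last h} h \<le> WW T h"
    proof (cases "{1..d} \<subseteq> last h")
      case True
      then have "(\<Prod>j\<in>{1..d}. wj j T h) = 1" by (auto simp: wj_def intro!: prod.neutral)
      then show ?thesis using True by (simp add: WW_def)
    qed (simp add: WW_def)
  qed
  also have "\<dots> \<le> (\<integral>\<^sup>+h. WW 0 h \<partial>hist \<phi> \<pi> 0)"
    by (rule iter_le[where a=0]) (auto intro: WW_step)
  also have "\<dots> = ennreal (\<Prod>j\<in>{1..d}. Aj j)" using WW_0 by simp
  finally show ?thesis .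
qed

end


lemma alg2:
  fixes f0 f1 N q :: real
  assumes "0 \<le> N" "0 \<le> f0" "f0 \<le> f1" "f1 \<le> 1" "q = (f1 - f0) / (1 - f0)"
  shows "(1 - q) * (N / (1 - f1)) \<le> N / (1 - f0)"
proof (cases "f0 = 1")
  case True
  then have f1: "f1 = 1" using assms by linarith
  show ?thesis using assms True f1 by simp
next
  case False
  then have f0: "f0 < 1" using assms by simp
  show ?thesis
  proof (cases "f1 = 1")
    case True
    then have "q = 1" using assms f0 by simp
    then show ?thesis using assms f0 by simp
  next
    case False
    then have f1: "f1 < 1" using assms by simp
    have q1: "1 - q = (1 - f1) / (1 - f0)" using f0 assms(5) by (simp add: field_simps)
    have ne: "1 - f1 \<noteq> 0" using f1 by simp
    have "(1 - q) * (N / (1 - f1)) = N / (1 - f0)" unfolding q1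
      using ne by (simp add: times_divide_times_eq mult.commute[of "1 - f0"])
    then show ?thesis by simp
  qed
qed

context
  fixes d :: nat and \<phi> :: "nat \<Rightarrow> nat set list \<Rightarrow> real" and \<pi> :: "nat \<Rightarrow> nat"
  assumes cfg: "configuration d \<phi>" and pik: "\<And>t. \<pi> t \<in> {1..d}"
begin

lemma qv_facts:
  assumes "length h = Suc t"
  shows "qv \<phi> \<pi> t h = (phi0 \<phi> (\<pi> t) (kseq \<pi> (\<pi> t) h t @ [last h \<inter> {1..<\<pi> t}]) - phi0 \<phi> (\<pi> t) (kseq \<pi> (\<pi> t) h t))
                    / (1 - phi0 \<phi> (\<pi> t) (kseq \<pi> (\<pi> t) h t))"
    and "0 \<le> phi0 \<phi> (\<pi> t) (kseq \<pi> (\<pi> t) h t)"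
    and "phi0 \<phi> (\<pi> t) (kseq \<pi> (\<pi> t) h t) \<le> phi0 \<phi> (\<pi> t) (kseq \<pi> (\<pi> t) h t @ [last h \<inter> {1..<\<pi> t}])"
    and "phi0 \<phi> (\<pi> t) (kseq \<pi> (\<pi> t) h t @ [last h \<inter> {1..<\<pi> t}]) \<le> 1"
    and "0 \<le> qv \<phi> \<pi> t h" and "qv \<phi> \<pi> t h \<le> 1"
proof -
  have i: "\<pi> t \<in> {1..d}" using pik by simp
  show q: "qv \<phi> \<pi> t h = (phi0 \<phi> (\<pi> t) (kseq \<pi> (\<pi> t) h t @ [last h \<inter> {1..<\<pi> t}]) - phi0 \<phi> (\<pi> t) (kseq \<pi> (\<pi> t) h t))
                    / (1 - phi0 \<phi> (\<pi> t) (kseq \<pi> (\<pi> t) h t))"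
    unfolding qv_def using last_len[OF assms] by (simp add: phi0_def)
  show a: "0 \<le> phi0 \<phi> (\<pi> t) (kseq \<pi> (\<pi> t) h t)" using phi0_bnd[OF cfg i] by simp
  show b: "phi0 \<phi> (\<pi> t) (kseq \<pi> (\<pi> t) h t) \<le> phi0 \<phi> (\<pi> t) (kseq \<pi> (\<pi> t) h t @ [last h \<inter> {1..<\<pi> t}])"
    using phi0_subseq[OF cfg i] by (simp add: subseq_rev_drop_many)
  show c: "phi0 \<phi> (\<pi> t) (kseq \<pi> (\<pi> t) h t @ [last h \<inter> {1..<\<pi> t}]) \<le> 1"
    using phi0_bnd[OF cfg i] by simp
  show "0 \<le> qv \<phi> \<pi> t h" "qv \<phi> \<pi> t h \<le> 1" unfolding q using q_bnd[OF a b c] by auto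
qed

lemma step_int_closed:
  assumes "\<pi> t \<notin> last h" "length h = Suc t"
  shows "(\<integral>\<^sup>+h'. f h' \<partial>hstep \<phi> \<pi> t h) =
     f (h @ [insert (\<pi> t) (last h)]) * ennreal (qv \<phi> \<pi> t h) + f (h @ [last h]) * ennreal (1 - qv \<phi> \<pi> t h)"
  using qv_facts[OF assms(2)] assms by (simp add: hstep_closed)

lemma support_closed:
  assumes "\<pi> t \<notin> last h" "length h = Suc t" "h' \<in> set_pmf (hstep \<phi> \<pi> t h)"
  shows "h' = h @ [insert (\<pi> t) (last h)] \<or> (h' = h @ [last h] \<and> qv \<phi> \<pi> t h < 1)"
proof -
  from assms obtain b where b: "b \<in> set_pmf (bernoulli_pmf (qv \<phi> \<pi> t h))"
    "h' = h @ [if b then insert (\<pi> t) (last h) else last h]"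
    by (auto simp: hstep_closed)
  show ?thesis
  proof (cases b)
    case False
    then have "pmf (bernoulli_pmf (qv \<phi> \<pi> t h)) False > 0" using b(1) by (simp add: set_pmf_eq')
    then have "qv \<phi> \<pi> t h < 1" using qv_facts[OF assms(2)] by simp
    then show ?thesis using b False by simp
  qed (use b in simp)
qed

lemma phi_lt1: "h \<in> set_pmf (hist \<phi> \<pi> t) \<Longrightarrow> j \<notin> last h \<Longrightarrow> phi0 \<phi> j (kseq \<pi> j h t) < 1"
proof (induction t arbitrary: h)
  case 0
  then show ?case by (simp add: phi0_def)
next
  case (Suc t)
  from Suc.prems obtain g where g: "g \<in> set_pmf (hist \<phi> \<pi> t)" "h \<in> set_pmf (hstep \<phi> \<pi> t g)"
    unfolding hist_Suc' by auto
  have lg: "length g = Suc t" using hist_len[OF g(1)] .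
  show ?case
  proof (cases "\<pi> t \<in> last g")
    case True
    then have h: "h = g @ [last g]" using g(2) by (simp add: hstep_open)
    then have "j \<notin> last g" "j \<noteq> \<pi> t" using Suc.prems True by auto
    then show ?thesis using Suc.IH[OF g(1)] h kseq_snoc_Suc[OF lg] by simp
  next
    case False
    note sc = support_closed[OF False lg g(2)]
    show ?thesis
    proof (cases "j = \<pi> t")
      case False
      have "j \<notin> last g" using sc Suc.prems by auto
      moreover have "kseq \<pi> j h (Suc t) = kseq \<pi> j g t" using sc False kseq_snoc_Suc[OF lg] by auto
      ultimately show ?thesis using Suc.IH[OF g(1)] by simp
    next
      case True
      then have hh: "h = g @ [last g]" "qv \<phi> \<pi> t g < 1" using sc Suc.prems by auto
      note qf = qv_facts[OF lg]
      have f0: "phi0 \<phi> j (kseq \<pi> j g t) < 1" using Suc.IH[OF g(1)] False True by simp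
      have k: "kseq \<pi> j h (Suc t) = kseq \<pi> j g t @ [last g \<inter> {1..<j}]"
        using hh kseq_snoc_Suc[OF lg] True by simp
      show ?thesis unfolding k using hh(2) qf(1) f0 True by (simp add: field_simps)
    qed
  qed
qed

end


lemma ennreal_aux: "0 \<le> (x::real) \<Longrightarrow> 0 \<le> y \<Longrightarrow> 0 * z + ennreal x * ennreal y = ennreal (y * x)"
  by (simp add: ennreal_mult mult.commute)

lemma okseq_rep'[simp]: "okseq i (replicate n {Suc 0..<i})"
  by (auto simp: okseq_def)

context
  fixes d :: nat and \<phi> :: "nat \<Rightarrow> nat set list \<Rightarrow> real" and \<pi> :: "nat \<Rightarrow> nat"
    and i a b :: nat
  assumes cfg: "configuration d \<phi>" and pik: "\<And>t. \<pi> t \<in> {1..d}"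
    and ab: "a < b" and blk: "\<And>s. a \<le> s \<Longrightarrow> s < b \<Longrightarrow> \<pi> s = i"
begin

lemma i_in: "i \<in> {1..d}" using pik[of a] blk[of a] ab by simp

definition UU :: "nat \<Rightarrow> nat set list \<Rightarrow> ennreal" where
  "UU t h = ennreal (if i \<in> last h then 0 else 1 / (1 - phi0 \<phi> i (kseq \<pi> i h t)))"

lemma UU_step:
  assumes h: "h \<in> set_pmf (hist \<phi> \<pi> t)"
  shows "(\<integral>\<^sup>+h'. UU (Suc t) h' \<partial>hstep \<phi> \<pi> t h) \<le> UU t h"
proof -
  have lh: "length h = Suc t" using hist_len[OF h] .
  show ?thesis
  proof (cases "\<pi> t \<in> last h")
    case True
    show ?thesis
    proof (cases "i \<in> last h")
      case True
      then show ?thesis using \<open>\<pi> t \<in> last h\<close> by (simp add: hstep_open UU_def)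
    next
      case False
      then have "\<pi> t \<noteq> i" using True by auto
      then show ?thesis using True False by (simp add: hstep_open UU_def kseq_snoc_Suc[OF lh])
    qed
  next
    case False
    note qf = qv_facts[of d \<phi> \<pi>, OF cfg pik lh]
    have si: "(\<integral>\<^sup>+h'. UU (Suc t) h' \<partial>hstep \<phi> \<pi> t h) =
     UU (Suc t) (h @ [insert (\<pi> t) (last h)]) * ennreal (qv \<phi> \<pi> t h) + UU (Suc t) (h @ [last h]) * ennreal (1 - qv \<phi> \<pi> t h)"
      by (rule step_int_closed[of d \<phi> \<pi>, OF cfg pik False lh])
    show ?thesis
    proof (cases "\<pi> t = i")
      case False
      define u where "u = (if i \<in> last h then 0 else 1 / (1 - phi0 \<phi> i (kseq \<pi> i h t)))"
      have u0: "0 \<le> u" unfolding u_def using phi0_bnd[OF cfg i_in, of "kseq \<pi> i h t"] by simp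
      have "UU (Suc t) (h @ [insert (\<pi> t) (last h)]) = ennreal u" "UU (Suc t) (h @ [last h]) = ennreal u" "UU t h = ennreal u"
        unfolding UU_def u_def using False by (auto simp: kseq_snoc_Suc[OF lh])
      then have "(\<integral>\<^sup>+h'. UU (Suc t) h' \<partial>hstep \<phi> \<pi> t h) = ennreal (qv \<phi> \<pi> t h * u + (1 - qv \<phi> \<pi> t h) * u)"
        unfolding si using qf u0 by (simp add: ennreal_comb)
      also have "\<dots> = UU t h" using \<open>UU t h = ennreal u\<close> by (simp add: algebra_simps)
      finally show ?thesis by simp
    next
      case True
      define f0 where "f0 = phi0 \<phi> i (kseq \<pi> i h t)"
      define f1 where "f1 = phi0 \<phi> i (kseq \<pi> i h t @ [last h \<inter> {1..<i}])"
      have e1: "UU (Suc t) (h @ [insert (\<pi> t) (last h)]) = 0" unfolding UU_def using True by simp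
      have e0: "UU (Suc t) (h @ [last h]) = ennreal (1 / (1 - f1))"
        unfolding UU_def f1_def using True False by (simp add: kseq_snoc_Suc[OF lh])
      have e: "UU t h = ennreal (1 / (1 - f0))" unfolding UU_def f0_def using True False by simp
      have f1: "f1 \<le> 1" unfolding f1_def using qf True by simp
      have "(\<integral>\<^sup>+h'. UU (Suc t) h' \<partial>hstep \<phi> \<pi> t h) = ennreal ((1 - qv \<phi> \<pi> t h) * (1 / (1 - f1)))"
        unfolding si e1 e0 using qf(6) f1 by (intro ennreal_aux) auto
      also have "\<dots> \<le> ennreal (1 / (1 - f0))"
        apply (rule ennreal_leI)
        apply (rule alg2)
        using qf True unfolding f0_def f1_def by auto
      finally show ?thesis using e by simp
    qed
  qed
qed

definition GG :: "nat \<Rightarrow> nat set list \<Rightarrow> ennreal" where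
  "GG t h = ennreal (if {1..<i} \<subseteq> last h \<and> i \<notin> last h then
      (1 - phi0 \<phi> i (kseq \<pi> i h t @ replicate (b - t) {1..<i})) / (1 - phi0 \<phi> i (kseq \<pi> i h t)) else 0)"

lemma GG_step:
  assumes h: "h \<in> set_pmf (hist \<phi> \<pi> t)" and t: "a \<le> t" "t < b"
  shows "(\<integral>\<^sup>+h'. GG (Suc t) h' \<partial>hstep \<phi> \<pi> t h) \<le> GG t h"
proof -
  have lh: "length h = Suc t" using hist_len[OF h] .
  have pit: "\<pi> t = i" using blk t by simp
  show ?thesis
  proof (cases "i \<in> last h")
    case True
    then show ?thesis using pit by (simp add: hstep_open GG_def)
  next
    case False
    then have F: "\<pi> t \<notin> last h" using pit by simp
    note qf = qv_facts[of d \<phi> \<pi>, OF cfg pik lh]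
    have si: "(\<integral>\<^sup>+h'. GG (Suc t) h' \<partial>hstep \<phi> \<pi> t h) =
     GG (Suc t) (h @ [insert (\<pi> t) (last h)]) * ennreal (qv \<phi> \<pi> t h) + GG (Suc t) (h @ [last h]) * ennreal (1 - qv \<phi> \<pi> t h)"
      by (rule step_int_closed[of d \<phi> \<pi>, OF cfg pik F lh])
    have e1: "GG (Suc t) (h @ [insert (\<pi> t) (last h)]) = 0" unfolding GG_def using pit by simp
    show ?thesis
    proof (cases "{1..<i} \<subseteq> last h")
      case False
      then have "GG (Suc t) (h @ [last h]) = 0" unfolding GG_def by simp
      then show ?thesis unfolding si e1 by simp
    next
      case True
      define f0 where "f0 = phi0 \<phi> i (kseq \<pi> i h t)"
      define f1 where "f1 = phi0 \<phi> i (kseq \<pi> i h t @ [last h \<inter> {1..<i}])"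
      define N where "N = 1 - phi0 \<phi> i (kseq \<pi> i h t @ replicate (b - t) {1..<i})"
      have bt: "b - t = Suc (b - Suc t)" using t by simp
      have li: "last h \<inter> {1..<i} = {1..<i}" using True by auto
      have ks: "kseq \<pi> i (h @ [last h]) (Suc t) = kseq \<pi> i h t @ [{1..<i}]"
        using kseq_snoc_Suc[OF lh] pit li by simp
      have e0: "GG (Suc t) (h @ [last h]) = ennreal (N / (1 - f1))"
        unfolding GG_def N_def f1_def using True False ks li bt by simp
      have e: "GG t h = ennreal (N / (1 - f0))" unfolding GG_def f0_def N_def using True False by simp
      have f1: "f1 \<le> 1" unfolding f1_def using qf pit by simp
      have N0: "0 \<le> N" unfolding N_def using phi0_bnd[OF cfg i_in, of "kseq \<pi> i h t @ replicate (b - t) {1..<i}"] by simp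
      have "(\<integral>\<^sup>+h'. GG (Suc t) h' \<partial>hstep \<phi> \<pi> t h) = ennreal ((1 - qv \<phi> \<pi> t h) * (N / (1 - f1)))"
        unfolding si e1 e0 using qf(6) f1 N0 by (intro ennreal_aux) auto
      also have "\<dots> \<le> ennreal (N / (1 - f0))"
        apply (rule ennreal_leI)
        apply (rule alg2[OF N0])
        using qf pit unfolding f0_def f1_def by auto
      finally show ?thesis using e by simp
    qed
  qed
qed

lemma GG_a:
  "GG a h \<le> ennreal (1 - phi0 \<phi> i (replicate (b - a) {1..<i})) * UU a h"
proof (cases "{1..<i} \<subseteq> last h \<and> i \<notin> last h")
  case True
  define f0 where "f0 = phi0 \<phi> i (kseq \<pi> i h a)"
  define pp where "pp = 1 - phi0 \<phi> i (replicate (b - a) {1..<i})"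
  have f0: "f0 \<le> 1" unfolding f0_def using phi0_bnd[OF cfg i_in] by simp
  have pp: "0 \<le> pp" unfolding pp_def using phi0_bnd[OF cfg i_in okseq_replicate] by simp
  have sub: "subseq (replicate (b - a) {1..<i}) (kseq \<pi> i h a @ replicate (b - a) {1..<i})"
    by (rule subseq_drop_many) simp
  have N: "1 - phi0 \<phi> i (kseq \<pi> i h a @ replicate (b - a) {1..<i}) \<le> pp"
    unfolding pp_def using phi0_subseq[OF cfg i_in _ sub] by simp
  have "GG a h = ennreal ((1 - phi0 \<phi> i (kseq \<pi> i h a @ replicate (b - a) {1..<i})) / (1 - f0))"
    unfolding GG_def f0_def using True by simp
  also have "\<dots> \<le> ennreal (pp / (1 - f0))"
    using N f0 by (intro ennreal_leI divide_right_mono) auto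
  also have "\<dots> = ennreal pp * ennreal (1 / (1 - f0))"
    using pp f0 by (simp add: ennreal_mult[symmetric])
  also have "\<dots> = ennreal pp * UU a h" unfolding UU_def f0_def using True by simp
  finally show ?thesis unfolding pp_def .
qed (auto simp: GG_def)

lemma GG_b:
  assumes h: "h \<in> set_pmf (hist \<phi> \<pi> b)"
  shows "indicator {h. {1..<i} \<subseteq> last h \<and> i \<notin> last h} h \<le> GG b h"
proof (cases "{1..<i} \<subseteq> last h \<and> i \<notin> last h")
  case True
  have "phi0 \<phi> i (kseq \<pi> i h b) < 1" using phi_lt1[OF cfg pik h] True by simp
  then show ?thesis using True by (simp add: GG_def)
qed simp

lemma block_bound:
  "emeasure (measure_pmf (hist \<phi> \<pi> b)) {h. {1..<i} \<subseteq> last h \<and> i \<notin> last h}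
     \<le> ennreal (1 - phi0 \<phi> i (replicate (b - a) {1..<i}))"
proof -
  define pp where "pp = 1 - phi0 \<phi> i (replicate (b - a) {1..<i})"
  have "emeasure (measure_pmf (hist \<phi> \<pi> b)) {h. {1..<i} \<subseteq> last h \<and> i \<notin> last h}
      = (\<integral>\<^sup>+h. indicator {h. {1..<i} \<subseteq> last h \<and> i \<notin> last h} h \<partial>hist \<phi> \<pi> b)"
    by simp
  also have "\<dots> \<le> (\<integral>\<^sup>+h. GG b h \<partial>hist \<phi> \<pi> b)"
    by (rule nn_mono_pmf) (rule GG_b)
  also have "\<dots> \<le> (\<integral>\<^sup>+h. GG a h \<partial>hist \<phi> \<pi> a)"
    by (rule iter_le) (auto intro: GG_step simp: less_imp_le[OF ab])
  also have "\<dots> \<le> (\<integral>\<^sup>+h. ennreal pp * UU a h \<partial>hist \<phi> \<pi> a)"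
    unfolding pp_def by (rule nn_mono_pmf) (rule GG_a)
  also have "\<dots> = ennreal pp * (\<integral>\<^sup>+h. UU a h \<partial>hist \<phi> \<pi> a)"
    by (rule nn_integral_cmult) simp
  also have "\<dots> \<le> ennreal pp * (\<integral>\<^sup>+h. UU 0 h \<partial>hist \<phi> \<pi> 0)"
    by (intro mult_left_mono iter_le) (auto intro: UU_step)
  also have "\<dots> = ennreal pp" by (simp add: UU_def phi0_def)
  finally show ?thesis unfolding pp_def .
qed

end


lemma all_open_bound':
  assumes "configuration d \<phi>" "\<forall>t. \<pi> t \<in> {1..d}"
  shows "emeasure (measure_pmf (hist \<phi> \<pi> T)) {h. {1..d} \<subseteq> last h}
     \<le> ennreal (\<Prod>j\<in>{1..d}. phi0 \<phi> j (replicate (cnt \<pi> j T) {1..<j}))"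
proof -
  have "emeasure (measure_pmf (hist \<phi> \<pi> T)) {h. {1..d} \<subseteq> last h} \<le> ennreal (\<Prod>j\<in>{1..d}. Aj \<phi> \<pi> T j)"
    by (rule all_open_bound) (use assms in auto)
  moreover have "(\<Prod>j\<in>{1..d}. Aj \<phi> \<pi> T j) = (\<Prod>j\<in>{1..d}. phi0 \<phi> j (replicate (cnt \<pi> j T) {1..<j}))"
    using Aj_def[of d \<phi> \<pi>] assms by (intro prod.cong) auto
  ultimately show ?thesis by simp
qed

lemma block_bound':
  assumes "configuration d \<phi>" "\<forall>t. \<pi> t \<in> {1..d}" "a < b" "\<forall>s. a \<le> s \<longrightarrow> s < b \<longrightarrow> \<pi> s = i"
  shows "emeasure (measure_pmf (hist \<phi> \<pi> b)) {h. {1..<i} \<subseteq> last h \<and> i \<notin> last h}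
     \<le> ennreal (1 - phi0 \<phi> i (replicate (b - a) {1..<i}))"
  by (rule block_bound) (use assms in auto)


lemma nn_cong_pmf: "(\<And>x. x \<in> set_pmf M \<Longrightarrow> f x = g x) \<Longrightarrow> (\<integral>\<^sup>+x. f x \<partial>measure_pmf M) = (\<integral>\<^sup>+x. g x \<partial>measure_pmf M)"
  by (intro nn_integral_cong_AE) (auto simp: AE_measure_pmf_iff)

lemma nn_const_pmf: "(\<And>x. x \<in> set_pmf M \<Longrightarrow> f x = c) \<Longrightarrow> (\<integral>\<^sup>+x. f x \<partial>measure_pmf M) = c"
proof -
  assume "\<And>x. x \<in> set_pmf M \<Longrightarrow> f x = c"
  then have "(\<integral>\<^sup>+x. f x \<partial>measure_pmf M) = (\<integral>\<^sup>+x. c \<partial>measure_pmf M)" by (rule nn_cong_pmf)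
  also have "\<dots> = c" by (simp add: measure_pmf.emeasure_space_1)
  finally show ?thesis .
qed

lemma base_nth: "(\<integral>\<^sup>+h. f (h ! c) \<partial>hist \<phi> \<pi> c) = (\<integral>\<^sup>+h. f (last h) \<partial>hist \<phi> \<pi> c)"
proof (rule nn_cong_pmf)
  fix h assume "h \<in> set_pmf (hist \<phi> \<pi> c)"
  from hist_len[OF this] show "f (h ! c) = f (last h)" by (simp add: last_len)
qed

lemma transfer_nth:
  "c \<le> T \<Longrightarrow> (\<integral>\<^sup>+h. f (h ! c) \<partial>hist \<phi> \<pi> T) = (\<integral>\<^sup>+h. f (last h) \<partial>hist \<phi> \<pi> c)"
proof (induction T)
  case 0
  then have c: "c = 0" by simp
  show ?case unfolding c by (rule base_nth)
next
  case (Suc T)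
  show ?case
  proof (cases "c = Suc T")
    case True
    show ?thesis unfolding True by (rule base_nth)
  next
    case False
    then have cT: "c \<le> T" using Suc.prems by simp
    have "(\<integral>\<^sup>+h. f (h ! c) \<partial>hist \<phi> \<pi> (Suc T)) = (\<integral>\<^sup>+h. (\<integral>\<^sup>+h'. f (h' ! c) \<partial>hstep \<phi> \<pi> T h) \<partial>hist \<phi> \<pi> T)"
      unfolding hist_Suc' by simp
    also have "\<dots> = (\<integral>\<^sup>+h. f (h ! c) \<partial>hist \<phi> \<pi> T)"
    proof (rule nn_cong_pmf)
      fix h assume h: "h \<in> set_pmf (hist \<phi> \<pi> T)"
      show "(\<integral>\<^sup>+h'. f (h' ! c) \<partial>hstep \<phi> \<pi> T h) = f (h ! c)"
      proof (rule nn_const_pmf)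
        fix h' assume "h' \<in> set_pmf (hstep \<phi> \<pi> T h)"
        then obtain x where "h' = h @ [x]" using hstep_support by blast
        then show "f (h' ! c) = f (h ! c)" using hist_len[OF h] cT by (simp add: nth_append)
      qed
    qed
    also have "\<dots> = (\<integral>\<^sup>+h. f (last h) \<partial>hist \<phi> \<pi> c)" using Suc.IH[OF cT] .
    finally show ?thesis .
  qed
qed

lemma hmono: "hinv \<pi> T h \<Longrightarrow> s \<le> s' \<Longrightarrow> s' \<le> T \<Longrightarrow> h ! s \<subseteq> h ! s'"
proof (induction s')
  case 0
  then show ?case by simp
next
  case (Suc s')
  show ?case
  proof (cases "s = Suc s'")
    case False
    then have "h ! s \<subseteq> h ! s'" using Suc by simp
    moreover have "h ! s' \<subseteq> h ! Suc s'" using Suc.prems by (simp add: hinv_def)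
    ultimately show ?thesis by blast
  qed simp
qed

lemma hgrow: "hinv \<pi> T h \<Longrightarrow> s \<le> s' \<Longrightarrow> s' \<le> T \<Longrightarrow> h ! s' \<subseteq> h ! s \<union> \<pi> ` {s..<s'}"
proof (induction s')
  case 0
  then show ?case by simp
next
  case (Suc s')
  show ?case
  proof (cases "s = Suc s'")
    case False
    then have "h ! s' \<subseteq> h ! s \<union> \<pi> ` {s..<s'}" using Suc by simp
    moreover have "h ! Suc s' \<subseteq> insert (\<pi> s') (h ! s')" using Suc.prems by (simp add: hinv_def)
    moreover have "s \<le> s'" using Suc.prems False by simp
    then have "\<pi> s' \<in> \<pi> ` {s..<Suc s'}" "\<pi> ` {s..<s'} \<subseteq> \<pi> ` {s..<Suc s'}" by auto
    ultimately show ?thesis by blast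
  qed simp
qed

definition nd :: "(nat \<Rightarrow> nat set list \<Rightarrow> real) \<Rightarrow> (nat \<Rightarrow> nat) \<Rightarrow> nat \<Rightarrow> nat \<Rightarrow> ennreal" where
  "nd \<phi> \<pi> d t = emeasure (measure_pmf (hist \<phi> \<pi> t)) {h. \<not> {1..d} \<subseteq> last h}"

lemma emeasure_last: "emeasure (measure_pmf M) {h. Q (last h)} = (\<integral>\<^sup>+h. indicator {X. Q X} (last h) \<partial>measure_pmf M)"
proof -
  have "emeasure (measure_pmf M) {h. Q (last h)} = (\<integral>\<^sup>+h. indicator {h. Q (last h)} h \<partial>measure_pmf M)"
    by simp
  also have "\<dots> = (\<integral>\<^sup>+h. indicator {X. Q X} (last h) \<partial>measure_pmf M)"
    by (simp add: indicator_def)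
  finally show ?thesis .
qed

lemma nd_mono: "t \<le> t' \<Longrightarrow> nd \<phi> \<pi> d t' \<le> nd \<phi> \<pi> d t"
proof -
  assume tt: "t \<le> t'"
  have "nd \<phi> \<pi> d t' = (\<integral>\<^sup>+h. indicator {X. \<not> {1..d} \<subseteq> X} (last h) \<partial>hist \<phi> \<pi> t')"
    unfolding nd_def by (rule emeasure_last)
  also have "\<dots> \<le> (\<integral>\<^sup>+h. indicator {X. \<not> {1..d} \<subseteq> X} (h ! t) \<partial>hist \<phi> \<pi> t')"
  proof (rule nn_mono_pmf)
    fix h assume h: "h \<in> set_pmf (hist \<phi> \<pi> t')"
    have "h ! t \<subseteq> h ! t'" using hmono[OF hist_hinv[OF h] tt] by simp
    moreover have "last h = h ! t'" using hist_len[OF h] by (simp add: last_len)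
    ultimately show "indicator {X. \<not> {1..d} \<subseteq> X} (last h) \<le> (indicator {X. \<not> {1..d} \<subseteq> X} (h ! t) :: ennreal)"
      by (auto simp: indicator_def)
  qed
  also have "\<dots> = (\<integral>\<^sup>+h. indicator {X. \<not> {1..d} \<subseteq> X} (last h) \<partial>hist \<phi> \<pi> t)"
    by (rule transfer_nth[OF tt])
  also have "\<dots> = nd \<phi> \<pi> d t" unfolding nd_def by (rule emeasure_last[symmetric])
  finally show ?thesis .
qed

lemma nd_early: "t < d \<Longrightarrow> nd \<phi> \<pi> d t = 1"
proof -
  assume td: "t < d"
  have "nd \<phi> \<pi> d t = (\<integral>\<^sup>+h. indicator {h. \<not> {1..d} \<subseteq> last h} h \<partial>hist \<phi> \<pi> t)"
    unfolding nd_def by simp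
  also have "\<dots> = 1"
  proof (rule nn_const_pmf)
    fix h assume h: "h \<in> set_pmf (hist \<phi> \<pi> t)"
    have hi: "hinv \<pi> t h" by (rule hist_hinv[OF h])
    have "h ! t \<subseteq> h ! 0 \<union> \<pi> ` {0..<t}" using hgrow[OF hi, of 0 t] by simp
    then have sub: "last h \<subseteq> \<pi> ` {0..<t}" using hi hist_len[OF h] by (simp add: hinv_def last_len)
    have "\<not> {1..d} \<subseteq> last h"
    proof
      assume "{1..d} \<subseteq> last h"
      then have "{1..d} \<subseteq> \<pi> ` {0..<t}" using sub by blast
      then have "card {1..d} \<le> card (\<pi> ` {0..<t})" by (intro card_mono) auto
      also have "\<dots> \<le> t" using card_image_le[of "{0..<t}" \<pi>] by simp
      finally show False using td by simp
    qed
    then show "indicator {h. \<not> {1..d} \<subseteq> last h} h = (1::ennreal)" by simp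
  qed
  finally show ?thesis .
qed

lemma length_alpha_block: "length (alpha_block d n) = d * 2^n"
  by (simp add: alpha_block_def length_concat comp_def sum_list_triv)

lemma alpha_block_nth: "r < d * 2^n \<Longrightarrow> alpha_block d n ! r = r div 2^n + 1"
proof (induction d arbitrary: r)
  case 0
  then show ?case by simp
next
  case (Suc d)
  have e: "alpha_block (Suc d) n = alpha_block d n @ replicate (2^n) (Suc d)"
    by (simp add: alpha_block_def)
  show ?case
  proof (cases "r < d * 2^n")
    case True
    then show ?thesis using Suc.IH e by (simp add: nth_append length_alpha_block)
  next
    case False
    then have "r - d * 2^n < 2^n" using Suc.prems by simp
    moreover have "r div 2^n = d"
      using False Suc.prems by (simp add: div_nat_eqI algebra_simps)
    ultimately show ?thesis using e False by (simp add: nth_append length_alpha_block)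
  qed
qed

lemma alpha_from_val: "1 \<le> d \<Longrightarrow> n \<le> k \<Longrightarrow> r < d * 2^k \<Longrightarrow> alpha_from d n (d * (2^k - 2^n) + r) = r div 2^k + 1"
proof (induction "k - n" arbitrary: n)
  case 0
  then have "n = k" by simp
  then show ?case using 0 by (simp add: length_alpha_block alpha_block_nth)
next
  case (Suc m)
  then have nk: "n < k" by simp
  have p: "2^n \<le> (2::nat)^k - 2^n"
  proof -
    have "2^(Suc n) \<le> (2::nat)^k" using nk by (intro power_increasing) auto
    then show ?thesis by simp
  qed
  have ge: "\<not> d * (2^k - 2^n) + r < d * 2^n"
  proof -
    have "d * 2^n \<le> d * (2^k - 2^n)" by (rule mult_le_mono2[OF p])
    then show ?thesis by linarith
  qed
  have sub: "d * (2^k - 2^n) + r - d * 2^n = d * (2^k - 2^Suc n) + r"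
  proof -
    have two: "(2::nat)^Suc n = 2^n + 2^n" by simp
    have q: "(2::nat)^k - 2^n = 2^n + (2^k - 2^Suc n)" using p unfolding two by arith
    have "d * (2^k - 2^n) = d * 2^n + d * (2^k - 2^Suc n)"
      unfolding q by (rule distrib_left)
    then show ?thesis by simp
  qed
  have "alpha_from d n (d * (2^k - 2^n) + r) = alpha_from d (Suc n) (d * (2^k - 2^Suc n) + r)"
    using ge Suc.prems sub by (simp add: length_alpha_block)
  also have "\<dots> = r div 2^k + 1" using Suc.hyps(1)[of "Suc n"] Suc.hyps(2) Suc.prems nk by simp
  finally show ?case .
qed

lemma alpha_val: "1 \<le> d \<Longrightarrow> r < d * 2^k \<Longrightarrow> alpha d (d * (2^k - 1) + r) = r div 2^k + 1"
  unfolding alpha_def using alpha_from_val[of d 0 k r] by simp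

lemma alpha_from_range: "1 \<le> d \<Longrightarrow> alpha_from d n t \<in> {1..d}"
proof (induction d n t rule: alpha_from.induct)
  case (1 d n t)
  show ?case
  proof (cases "t < length (alpha_block d n)")
    case True
    then have "t div 2^n < d" using length_alpha_block[of d n] by (simp add: less_mult_imp_div_less)
    then show ?thesis using True 1 by (simp add: length_alpha_block alpha_block_nth)
  next
    case False
    then show ?thesis using 1 by simp
  qed
qed

lemma alpha_range: "1 \<le> d \<Longrightarrow> alpha d t \<in> {1..d}"
  unfolding alpha_def by (rule alpha_from_range)


lemma pow_bound:
  fixes x :: real
  assumes "0 \<le> x" "x \<le> 1"
  shows "(1 - x)^r \<le> 1 / (1 + real r * x)"
proof -
  have "1 + real r * x \<le> (1 + x)^r" using Bernoulli_inequality[of x r] assms by simp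
  moreover have "(1 - x)^r * (1 + x)^r \<le> 1"
  proof -
    have "(1 - x)^r * (1 + x)^r = (1 - x*x)^r" by (simp add: power_mult_distrib[symmetric] algebra_simps)
    also have "\<dots> \<le> 1" using assms by (intro power_le_one) (auto simp: mult_le_one)
    finally show ?thesis .
  qed
  moreover have "0 \<le> (1 - x)^r" using assms by simp
  moreover have "0 < 1 + real r * x" using assms by (simp add: add_pos_nonneg)
  ultimately have "(1 - x)^r * (1 + real r * x) \<le> 1"
    by (meson order_trans mult_left_mono)
  then show ?thesis using \<open>0 < 1 + real r * x\<close> by (simp add: field_simps)
qed

lemma y_bound:
  fixes y :: real
  assumes "0 \<le> y"
  shows "min 1 y / 2 \<le> 1 - 1 / (1 + y)"
proof (cases "y \<le> 1")
  case True
  have "y * y \<le> y * 1" using mult_left_mono[OF True assms] .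
  then show ?thesis using assms True by (simp add: field_simps)
next
  case False
  then show ?thesis by (simp add: field_simps)
qed

lemma comb:
  fixes p :: "nat \<Rightarrow> real" and c :: "nat \<Rightarrow> nat"
  assumes anti: "\<And>m n. m \<le> n \<Longrightarrow> p n \<le> p m"
    and pb: "\<And>n. 0 \<le> p n \<and> p n \<le> 1"
    and sumc: "(\<Sum>j\<in>{1..d}. c j) \<le> t" and tn: "2 * t \<le> d * n" and d1: "1 \<le> d"
  shows "min 1 (real d * p n) / 4 \<le> 1 - (\<Prod>j\<in>{1..d}. (1 - p (c j)))"
proof -
  define B where "B = {j\<in>{1..d}. n < c j}"
  define S where "S = {j\<in>{1..d}. c j \<le> n}"
  have fin: "finite B" "finite S" unfolding B_def S_def by auto
  have un: "{1..d} = S \<union> B" "S \<inter> B = {}" unfolding B_def S_def by auto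
  have "card B * (n + 1) = (\<Sum>j\<in>B. n + 1)" by simp
  also have "\<dots> \<le> (\<Sum>j\<in>B. c j)" by (intro sum_mono) (auto simp: B_def)
  also have "\<dots> \<le> (\<Sum>j\<in>{1..d}. c j)" by (intro sum_mono2) (auto simp: B_def)
  finally have "card B * (n + 1) \<le> t" using sumc by linarith
  then have "2 * (card B * (n + 1)) \<le> d * n" using tn by linarith
  then have B2: "2 * card B < d"
  proof -
    assume a: "2 * (card B * (n + 1)) \<le> d * n"
    show "2 * card B < d"
    proof (rule ccontr)
      assume "\<not> 2 * card B < d"
      then have "d * (n + 1) \<le> 2 * card B * (n + 1)" by (intro mult_le_mono1) simp
      then show False using a d1 by (simp add: algebra_simps)
    qed
  qed
  have "d = card (S \<union> B)" using un(1)[symmetric] by simp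
  then have cS: "card S + card B = d" using card_Un_disjoint[OF fin(2) fin(1) un(2)] by simp
  define r where "r = card S"
  have r: "real d \<le> 2 * real r" using B2 cS unfolding r_def by linarith
  define x where "x = p n"
  have x: "0 \<le> x" "x \<le> 1" using pb unfolding x_def by auto
  have "(\<Prod>j\<in>{1..d}. (1 - p (c j))) = (\<Prod>j\<in>S. (1 - p (c j))) * (\<Prod>j\<in>B. (1 - p (c j)))"
    unfolding un(1) using prod.union_disjoint[OF fin(2) fin(1) un(2)] by simp
  also have "\<dots> \<le> (\<Prod>j\<in>S. (1 - p (c j)))"
    using pb by (intro mult_left_le prod_le_1 prod_nonneg) (auto simp: algebra_simps)
  also have "\<dots> \<le> (\<Prod>j\<in>S. (1 - x))"
    using pb anti unfolding x_def S_def by (intro prod_mono) (auto simp: algebra_simps)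
  also have "\<dots> = (1 - x)^r" unfolding r_def by simp
  also have "\<dots> \<le> 1 / (1 + real r * x)" by (rule pow_bound[OF x])
  finally have P: "(\<Prod>j\<in>{1..d}. (1 - p (c j))) \<le> 1 / (1 + real r * x)" .
  have "min 1 (real d * x) / 4 \<le> min 1 (real r * x) / 2"
  proof -
    have "real d * x \<le> 2 * (real r * x)" using r x by (metis mult.assoc mult_right_mono)
    then show ?thesis by (auto simp: min_def)
  qed
  also have "\<dots> \<le> 1 - 1 / (1 + real r * x)" using x by (intro y_bound) simp
  finally show ?thesis using P unfolding x_def by linarith
qed

lemma cnt_Suc: "cnt \<pi> j (Suc t) = cnt \<pi> j t + (if \<pi> t = j then 1 else 0)"
  by (simp add: cnt_def)

lemma sum_cnt: "\<forall>s. \<pi> s \<in> {1..d} \<Longrightarrow> (\<Sum>j\<in>{1..d}. cnt \<pi> j t) = t"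
proof (induction t)
  case 0
  then show ?case by (simp add: cnt_def)
next
  case (Suc t)
  have "(\<Sum>j\<in>{1..d}. cnt \<pi> j (Suc t)) = (\<Sum>j\<in>{1..d}. cnt \<pi> j t) + (\<Sum>j\<in>{1..d}. (if \<pi> t = j then 1 else 0))"
    by (simp add: cnt_Suc sum.distrib)
  also have "(\<Sum>j\<in>{1..d}. (if \<pi> t = j then 1 else 0)) = (1::nat)" using Suc.prems by simp
  finally show ?case using Suc by simp
qed

context
  fixes d :: nat and \<phi> :: "nat \<Rightarrow> nat set list \<Rightarrow> real"
  assumes cfg: "configuration d \<phi>" and d1: "1 \<le> d"
    and feq: "\<forall>i\<in>{1..d}. fund \<phi> i = fund \<phi> 1"
begin

lemma fund_eq: "i \<in> {1..d} \<Longrightarrow> 1 - phi0 \<phi> i (replicate m {1..<i}) = fund \<phi> 1 m"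
  using feq by (metis fund_def)

lemma fund_bnd: "0 \<le> fund \<phi> 1 m \<and> fund \<phi> 1 m \<le> 1"
proof -
  have i: "1 \<in> {1..d}" using d1 by simp
  show ?thesis unfolding fund_def using phi0_bnd[OF cfg i, of "replicate m {1..<1}"] by (simp add: okseq_def)
qed

lemma fund_anti: "m \<le> n \<Longrightarrow> fund \<phi> 1 n \<le> fund \<phi> 1 m"
proof -
  assume "m \<le> n"
  have i: "1 \<in> {1..d}" using d1 by simp
  show ?thesis unfolding fund_def
    using phi0_subseq[OF cfg i _ subseq_replicate[OF cfg i \<open>m \<le> n\<close>], of "{1..<1}"] by (simp add: okseq_def)
qed

lemma nd_lower:
  assumes pik: "\<forall>t. \<pi> t \<in> {1..d}" and tn: "2 * t \<le> d * n"
  shows "ennreal (min 1 (real d * fund \<phi> 1 n) / 4) \<le> nd \<phi> \<pi> d t"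
proof -
  let ?M = "measure_pmf (hist \<phi> \<pi> t)"
  let ?A = "{h. {1..d} \<subseteq> last h}"
  have "ennreal (measure ?M ?A) \<le> ennreal (\<Prod>j\<in>{1..d}. phi0 \<phi> j (replicate (cnt \<pi> j t) {1..<j}))"
    using all_open_bound'[OF cfg pik, of t] by (simp add: measure_pmf.emeasure_eq_measure)
  moreover have "(\<Prod>j\<in>{1..d}. phi0 \<phi> j (replicate (cnt \<pi> j t) {1..<j})) = (\<Prod>j\<in>{1..d}. (1 - fund \<phi> 1 (cnt \<pi> j t)))"
    using fund_eq by (intro prod.cong) (auto simp: algebra_simps)
  moreover have "0 \<le> (\<Prod>j\<in>{1..d}. (1 - fund \<phi> 1 (cnt \<pi> j t)))"
    using fund_bnd by (intro prod_nonneg) (auto simp: algebra_simps)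
  ultimately have pA: "measure ?M ?A \<le> (\<Prod>j\<in>{1..d}. (1 - fund \<phi> 1 (cnt \<pi> j t)))"
    by (simp add: ennreal_le_iff)
  have "min 1 (real d * fund \<phi> 1 n) / 4 \<le> 1 - (\<Prod>j\<in>{1..d}. (1 - fund \<phi> 1 (cnt \<pi> j t)))"
  proof (rule comb)
    show "\<And>m n. m \<le> n \<Longrightarrow> fund \<phi> 1 n \<le> fund \<phi> 1 m" by (rule fund_anti)
    show "\<And>n. 0 \<le> fund \<phi> 1 n \<and> fund \<phi> 1 n \<le> 1" by (rule fund_bnd)
    show "(\<Sum>j\<in>{1..d}. cnt \<pi> j t) \<le> t" using sum_cnt[OF pik, of t] by simp
  qed (use tn d1 in auto)
  also have "\<dots> \<le> 1 - measure ?M ?A" using pA by simp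
  also have "\<dots> = measure ?M (space ?M - ?A)" by (subst measure_pmf.prob_compl) auto
  finally have "min 1 (real d * fund \<phi> 1 n) / 4 \<le> measure ?M {h. \<not> {1..d} \<subseteq> last h}"
    by (simp add: set_diff_eq)
  then show ?thesis unfolding nd_def by (simp add: measure_pmf.emeasure_eq_measure)
qed

end


definition ee :: "nat \<Rightarrow> nat \<Rightarrow> nat" where "ee d k = d * (2^k - 1)"

lemma ee_Suc: "ee d (Suc k) = ee d k + d * 2^k"
proof -
  have p: "(1::nat) \<le> 2^k" by simp
  have q: "(2::nat)^Suc k - 1 = (2^k - 1) + 2^k" using p by simp
  show ?thesis unfolding ee_def q by (rule distrib_left)
qed

lemma ee_0[simp]: "ee d 0 = 0" by (simp add: ee_def)

lemma alpha_in: "1 \<le> d \<Longrightarrow> ee d k \<le> s \<Longrightarrow> s < ee d (Suc k) \<Longrightarrow> alpha d s = (s - ee d k) div 2^k + 1"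
proof -
  assume d: "1 \<le> d" and s: "ee d k \<le> s" "s < ee d (Suc k)"
  have r: "s - ee d k < d * 2^k" using s ee_Suc[of d k] by simp
  have "alpha d (d * (2^k - 1) + (s - ee d k)) = (s - ee d k) div 2^k + 1"
    by (rule alpha_val[OF d r])
  moreover have "d * (2^k - 1) + (s - ee d k) = s" using s unfolding ee_def by simp
  ultimately show ?thesis by simp
qed

lemma regroup:
  fixes f :: "nat \<Rightarrow> ennreal" and e :: "nat \<Rightarrow> nat"
  assumes sm: "strict_mono e" and e0: "e 0 = 0"
  shows "(\<Sum>t. f t) = (\<Sum>k. \<Sum>t\<in>{e k..<e (Suc k)}. f t)"
proof -
  define g where "g k = (\<Sum>t\<in>{e k..<e (Suc k)}. f t)" for k
  have ps: "(\<Sum>k<K. g k) = (\<Sum>t<e K. f t)" for K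
  proof (induction K)
    case 0
    then show ?case using e0 by simp
  next
    case (Suc K)
    have le: "e K \<le> e (Suc K)" using sm by (simp add: strict_mono_less_eq)
    have "(\<Sum>t<e (Suc K). f t) = (\<Sum>t\<in>{0..<e K}. f t) + (\<Sum>t\<in>{e K..<e (Suc K)}. f t)"
      using sum.atLeastLessThan_concat[of 0 "e K" "e (Suc K)" f] le by (simp add: atLeast0LessThan)
    then show ?case using Suc by (simp add: g_def atLeast0LessThan)
  qed
  have "(\<lambda>n. \<Sum>t<n. f t) \<longlonglongrightarrow> (\<Sum>t. f t)" by (rule summable_LIMSEQ) simp
  from LIMSEQ_subseq_LIMSEQ[OF this sm] have "(\<lambda>K. \<Sum>k<K. g k) \<longlonglongrightarrow> (\<Sum>t. f t)"
    by (simp add: ps comp_def)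
  then have "g sums (\<Sum>t. f t)" by (simp add: sums_def)
  then show ?thesis unfolding g_def by (rule sums_unique)
qed

lemma ee_mono: "1 \<le> d \<Longrightarrow> strict_mono (ee d)"
  unfolding strict_mono_Suc_iff using ee_Suc by simp

context
  fixes d :: nat and \<phi> :: "nat \<Rightarrow> nat set list \<Rightarrow> real"
  assumes cfg: "configuration d \<phi>" and d1: "1 \<le> d"
    and feq: "\<forall>i\<in>{1..d}. fund \<phi> i = fund \<phi> 1"
begin

lemma pik_alpha: "\<forall>t. alpha d t \<in> {1..d}" using alpha_range[OF d1] by blast

lemma phase_end: "nd \<phi> (alpha d) d (ee d (Suc k)) \<le> ennreal (real d * fund \<phi> 1 (2^k))"
proof -
  define T where "T = ee d (Suc k)"
  define b where "b i = ee d k + i * 2^k" for i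
  have bT: "i \<in> {1..d} \<Longrightarrow> b i \<le> T" for i unfolding b_def T_def ee_Suc by simp
  have blk: "i \<in> {1..d} \<Longrightarrow> b (i - 1) \<le> s \<Longrightarrow> s < b i \<Longrightarrow> alpha d s = i" for i s
  proof -
    assume i: "i \<in> {1..d}" and s: "b (i - 1) \<le> s" "s < b i"
    have sT: "ee d k \<le> s" "s < ee d (Suc k)" using s bT[OF i] unfolding b_def T_def by auto
    have bi: "b i = b (i - 1) + 2^k" using i by (cases i) (auto simp: b_def)
    have r1: "2^k * (i - 1) \<le> s - ee d k" using s(1) unfolding b_def by (simp add: mult.commute)
    have r2: "s - ee d k < 2^k * Suc (i - 1)" using s(2) sT(1) unfolding bi unfolding b_def by (simp add: algebra_simps)
    have "(s - ee d k) div 2^k = i - 1" by (rule div_nat_eqI[OF r1 r2])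
    then show ?thesis using alpha_in[OF d1 sT] i by simp
  qed
  have aft: "i \<in> {1..d} \<Longrightarrow> b i \<le> s \<Longrightarrow> s < T \<Longrightarrow> i < alpha d s" for i s
  proof -
    assume i: "i \<in> {1..d}" and s: "b i \<le> s" "s < T"
    have sT: "ee d k \<le> s" "s < ee d (Suc k)" using s unfolding b_def T_def by auto
    have "i \<le> (s - ee d k) div 2^k"
      using s by (subst less_eq_div_iff_mult_less_eq) (auto simp: b_def)
    then show ?thesis using alpha_in[OF d1 sT] by simp
  qed
  have bb: "b i - b (i - 1) = 2^k" "b (i - 1) < b i" if ii: "i \<in> {1..d}" for i
  proof -
    obtain m where m: "i = Suc m" using ii by (cases i) auto
    show "b i - b (i - 1) = 2^k" "b (i - 1) < b i" unfolding m b_def by simp_all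
  qed
  let ?E = "\<lambda>i. {X. {1..<i} \<subseteq> X \<and> i \<notin> X}"
  have "nd \<phi> (alpha d) d T = (\<integral>\<^sup>+h. indicator {X. \<not> {1..d} \<subseteq> X} (last h) \<partial>hist \<phi> (alpha d) T)"
    unfolding nd_def by (rule emeasure_last)
  also have "\<dots> \<le> (\<integral>\<^sup>+h. (\<Sum>i\<in>{1..d}. indicator (?E i) (h ! b i)) \<partial>hist \<phi> (alpha d) T)"
  proof (rule nn_mono_pmf)
    fix h assume h: "h \<in> set_pmf (hist \<phi> (alpha d) T)"
    have hi: "hinv (alpha d) T h" by (rule hist_hinv[OF h])
    have lh: "last h = h ! T" using hist_len[OF h] by (simp add: last_len)
    show "indicator {X. \<not> {1..d} \<subseteq> X} (last h) \<le> (\<Sum>i\<in>{1..d}. indicator (?E i) (h ! b i) :: ennreal)"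
    proof (cases "{1..d} \<subseteq> last h")
      case True
      then show ?thesis by simp
    next
      case False
      define i where "i = (LEAST i. i \<in> {1..d} \<and> i \<notin> h ! T)"
      have ex: "\<exists>i. i \<in> {1..d} \<and> i \<notin> h ! T" using False lh by auto
      have i: "i \<in> {1..d}" "i \<notin> h ! T" using LeastI_ex[OF ex] unfolding i_def by auto
      have "i \<notin> h ! b i" using hmono[OF hi, of "b i" T] bT[OF i(1)] i(2) by auto
      moreover have "{1..<i} \<subseteq> h ! b i"
      proof
        fix j assume j: "j \<in> {1..<i}"
        have "j \<in> h ! T"
        proof (rule ccontr)
          assume "j \<notin> h ! T"
          then have "i \<le> j" unfolding i_def using j i(1) by (intro Least_le) auto
          then show False using j by simp
        qed
        moreover have "h ! T \<subseteq> h ! b i \<union> alpha d ` {b i..<T}" using hgrow[OF hi, of "b i" T] bT[OF i(1)] by simp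
        moreover have "j \<notin> alpha d ` {b i..<T}" using aft[OF i(1)] j by fastforce
        ultimately show "j \<in> h ! b i" by blast
      qed
      ultimately have "indicator (?E i) (h ! b i) = (1::ennreal)" by simp
      then have "1 \<le> (\<Sum>i\<in>{1..d}. indicator (?E i) (h ! b i) :: ennreal)"
        using member_le_sum[of i "{1..d}" "\<lambda>i. indicator (?E i) (h ! b i) :: ennreal"] i(1) by simp
      then show ?thesis using False by simp
    qed
  qed
  also have "\<dots> = (\<Sum>i\<in>{1..d}. (\<integral>\<^sup>+h. indicator (?E i) (h ! b i) \<partial>hist \<phi> (alpha d) T))"
    by (rule nn_integral_sum) simp
  also have "\<dots> = (\<Sum>i\<in>{1..d}. (\<integral>\<^sup>+h. indicator (?E i) (last h) \<partial>hist \<phi> (alpha d) (b i)))"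
    using bT by (intro sum.cong refl transfer_nth) auto
  also have "\<dots> = (\<Sum>i\<in>{1..d}. emeasure (measure_pmf (hist \<phi> (alpha d) (b i))) {h. {1..<i} \<subseteq> last h \<and> i \<notin> last h})"
    by (intro sum.cong refl) (rule emeasure_last[symmetric])
  also have "\<dots> \<le> (\<Sum>i\<in>{1..d}. ennreal (fund \<phi> 1 (2^k)))"
  proof (rule sum_mono)
    fix i assume i: "i \<in> {1..d}"
    have "emeasure (measure_pmf (hist \<phi> (alpha d) (b i))) {h. {1..<i} \<subseteq> last h \<and> i \<notin> last h}
      \<le> ennreal (1 - phi0 \<phi> i (replicate (b i - b (i - 1)) {1..<i}))"
      by (rule block_bound'[OF cfg pik_alpha bb(2)[OF i]]) (use blk[OF i] in auto)
    then show "emeasure (measure_pmf (hist \<phi> (alpha d) (b i))) {h. {1..<i} \<subseteq> last h \<and> i \<notin> last h}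
      \<le> ennreal (fund \<phi> 1 (2^k))" using bb(1)[OF i] fund_eq[OF cfg d1 feq i] by simp
  qed
  also have "\<dots> = ennreal (real d * fund \<phi> 1 (2^k))"
    using fund_bnd[OF cfg d1 feq] by (simp add: ennreal_mult ennreal_of_nat_eq_real_of_nat)
  finally show ?thesis unfolding T_def .
qed

end


lemma Tseq_nd: "Tseq d \<phi> \<pi> = (\<Sum>t. nd \<phi> \<pi> d t)"
  unfolding Tseq_def nd_def by (simp add: measure_pmf.emeasure_eq_measure)

lemma nd_le1: "nd \<phi> \<pi> d t \<le> 1"
  unfolding nd_def by (rule measure_pmf.emeasure_le_1)

lemma card_block: "card {ee d k..<ee d (Suc k)} = d * 2^k"
  using ee_Suc[of d k] by simp

lemma ee_le: "ee d (Suc k) \<le> d * 2^Suc k"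
  unfolding ee_def by (intro mult_le_mono2) simp

lemma sum_const_ennreal: "(\<Sum>t\<in>A. ennreal c) = ennreal (real (card A) * c)" if "0 \<le> c"
  using that by (simp add: ennreal_mult ennreal_of_nat_eq_real_of_nat)

context
  fixes d :: nat and \<phi> :: "nat \<Rightarrow> nat set list \<Rightarrow> real"
  assumes cfg: "configuration d \<phi>" and d1: "1 \<le> d"
    and feq: "\<forall>i\<in>{1..d}. fund \<phi> i = fund \<phi> 1"
begin

definition mk :: "nat \<Rightarrow> real" where "mk k = min 1 (real d * fund \<phi> 1 (2^(k+2)))"

lemma mk_nn: "0 \<le> mk k"
  unfolding mk_def using fund_bnd[OF cfg d1 feq] by simp

definition LL :: ennreal where "LL = (\<Sum>k. ennreal (real (d * 2^k) * (mk k / 4)))"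

lemma lower_L:
  assumes pik: "\<forall>t. \<pi> t \<in> {1..d}"
  shows "LL \<le> Tseq d \<phi> \<pi>"
proof -
  have "Tseq d \<phi> \<pi> = (\<Sum>k. \<Sum>t\<in>{ee d k..<ee d (Suc k)}. nd \<phi> \<pi> d t)"
    unfolding Tseq_nd by (rule regroup[OF ee_mono[OF d1] ee_0])
  moreover have "LL \<le> (\<Sum>k. \<Sum>t\<in>{ee d k..<ee d (Suc k)}. nd \<phi> \<pi> d t)"
    unfolding LL_def
  proof (rule suminf_le)
    fix k
    have m4: "0 \<le> mk k / 4" using mk_nn[of k] by simp
    have "ennreal (real (d * 2^k) * (mk k / 4)) = (\<Sum>t\<in>{ee d k..<ee d (Suc k)}. ennreal (mk k / 4))"
      unfolding sum_const_ennreal[OF m4] card_block ..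
    also have "\<dots> \<le> (\<Sum>t\<in>{ee d k..<ee d (Suc k)}. nd \<phi> \<pi> d t)"
    proof (rule sum_mono)
      fix t assume t: "t \<in> {ee d k..<ee d (Suc k)}"
      have "2 * t \<le> d * 2^(k+2)" using t ee_le[of d k] by simp
      then show "ennreal (mk k / 4) \<le> nd \<phi> \<pi> d t"
        unfolding mk_def by (rule nd_lower[OF cfg d1 feq pik])
    qed
    finally show "ennreal (real (d * 2^k) * (mk k / 4)) \<le> (\<Sum>t\<in>{ee d k..<ee d (Suc k)}. nd \<phi> \<pi> d t)" .
  qed auto
  ultimately show ?thesis by simp
qed

lemma lower_d:
  shows "of_nat d \<le> Tseq d \<phi> \<pi>"
proof -
  have "of_nat d = (\<Sum>t<d. nd \<phi> \<pi> d t)" by (simp add: nd_early)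
  also have "\<dots> \<le> (\<Sum>t. nd \<phi> \<pi> d t)" by (rule sum_le_suminf) auto
  finally show ?thesis unfolding Tseq_nd .
qed

lemma upper:
  "Tseq d \<phi> (alpha d) \<le> 32 * LL + of_nat (7 * d)"
proof -
  define B where "B k = (\<Sum>t\<in>{ee d k..<ee d (Suc k)}. nd \<phi> (alpha d) d t)" for k
  have T: "Tseq d \<phi> (alpha d) = (\<Sum>k. B k)"
    unfolding Tseq_nd B_def by (rule regroup[OF ee_mono[OF d1] ee_0])
  also have "\<dots> = (\<Sum>k. B (k + 3)) + (\<Sum>k<3. B k)" by (rule suminf_offset) simp
  also have "\<dots> \<le> 32 * LL + of_nat (7 * d)"
  proof (rule add_mono)
    have Bk: "B k \<le> of_nat (d * 2^k)" for k
    proof -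
      have "B k \<le> (\<Sum>t\<in>{ee d k..<ee d (Suc k)}. 1)" unfolding B_def by (intro sum_mono nd_le1)
      then show ?thesis by (simp add: ee_Suc)
    qed
    have "(\<Sum>k<3. B k) \<le> (\<Sum>k<3. of_nat (d * 2^k))" by (intro sum_mono Bk)
    also have "(\<Sum>k<3. of_nat (d * 2^k)) = (of_nat (\<Sum>k<3. d * 2^k) :: ennreal)"
      by (rule of_nat_sum[symmetric])
    also have "(\<Sum>k<(3::nat). d * 2^k) = 7 * d" by (simp add: numeral_3_eq_3)
    finally show "(\<Sum>k<3. B k) \<le> of_nat (7 * d)" .
  next
    have "B (k + 3) \<le> 32 * ennreal (real (d * 2^k) * (mk k / 4))" for k
    proof -
      have "B (k + 3) \<le> (\<Sum>t\<in>{ee d (k+3)..<ee d (Suc (k+3))}. ennreal (mk k))"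
        unfolding B_def
      proof (rule sum_mono)
        fix t assume t: "t \<in> {ee d (k+3)..<ee d (Suc (k+3))}"
        have e3: "Suc (k + 2) = k + 3" by simp
        have "nd \<phi> (alpha d) d t \<le> nd \<phi> (alpha d) d (ee d (Suc (k + 2)))"
          unfolding e3 using t by (intro nd_mono) simp
        also have "\<dots> \<le> ennreal (real d * fund \<phi> 1 (2^(k+2)))" by (rule phase_end[OF cfg d1 feq])
        finally have a: "nd \<phi> (alpha d) d t \<le> ennreal (real d * fund \<phi> 1 (2^(k+2)))" .
        show "nd \<phi> (alpha d) d t \<le> ennreal (mk k)"
        proof (cases "1 \<le> real d * fund \<phi> 1 (2^(k+2))")
          case True
          then have "mk k = 1" unfolding mk_def by simp
          then show ?thesis using nd_le1 by simp
        next
          case False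
          then have "mk k = real d * fund \<phi> 1 (2^(k+2))" unfolding mk_def by simp
          then show ?thesis using a by simp
        qed
      qed
      also have "\<dots> = ennreal (real (d * 2^(k+3)) * mk k)"
        unfolding sum_const_ennreal[OF mk_nn] card_block[of d "k+3"] ..
      also have "\<dots> = ennreal (32 * (real (d * 2^k) * (mk k / 4)))"
        by (simp add: power_add mult_ac)
      also have "\<dots> = ennreal 32 * ennreal (real (d * 2^k) * (mk k / 4))"
        by (rule ennreal_mult) (use mk_nn[of k] in auto)
      also have "\<dots> = 32 * ennreal (real (d * 2^k) * (mk k / 4))"
        by (simp only: ennreal_numeral)
      finally show ?thesis .
    qed
    then have "(\<Sum>k. B (k + 3)) \<le> (\<Sum>k. 32 * ennreal (real (d * 2^k) * (mk k / 4)))"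
      by (intro suminf_le) auto
    also have "\<dots> = 32 * LL" unfolding LL_def by simp
    finally show "(\<Sum>k. B (k + 3)) \<le> 32 * LL" .
  qed
  finally show ?thesis .
qed

lemma final_bounds:
  "Topt d \<phi> \<le> Tseq d \<phi> (alpha d) \<and> Tseq d \<phi> (alpha d) \<le> ennreal 39 * Topt d \<phi>"
proof
  have ak: "alpha d \<in> knock_seqs d" using pik_alpha[OF cfg d1 feq] by (simp add: knock_seqs_def)
  show "Topt d \<phi> \<le> Tseq d \<phi> (alpha d)" unfolding Topt_def by (rule INF_lower[OF ak])
  have L: "LL \<le> Topt d \<phi>" unfolding Topt_def
    by (rule INF_greatest) (rule lower_L, simp add: knock_seqs_def)
  have D: "of_nat d \<le> Topt d \<phi>" unfolding Topt_def
    by (rule INF_greatest) (rule lower_d)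
  have "Tseq d \<phi> (alpha d) \<le> 32 * LL + of_nat (7 * d)" by (rule upper)
  also have "\<dots> \<le> 32 * Topt d \<phi> + 7 * Topt d \<phi>"
  proof (rule add_mono)
    show "32 * LL \<le> 32 * Topt d \<phi>" using L by (rule mult_left_mono) simp
    have "(of_nat (7 * d) :: ennreal) = 7 * of_nat d" by simp
    also have "\<dots> \<le> 7 * Topt d \<phi>" using D by (rule mult_left_mono) simp
    finally show "(of_nat (7 * d) :: ennreal) \<le> 7 * Topt d \<phi>" .
  qed
  also have "\<dots> = (32 + 7) * Topt d \<phi>" by (rule distrib_right[symmetric])
  also have "(32 + 7 :: ennreal) = ennreal 39" by simp
  finally show "Tseq d \<phi> (alpha d) \<le> ennreal 39 * Topt d \<phi>" .
qed

end

theorem mainTheorem5: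
  "\<exists>c::real. c > 0 \<and>
     (\<forall>(d::nat) \<phi>.
        d \<ge> 2 \<longrightarrow> configuration d \<phi> \<longrightarrow>
        (\<forall>i\<in>{1..d}. summable (fund \<phi> i)) \<longrightarrow>
        (\<forall>i\<in>{1..d}. \<forall>j\<in>{1..d}. fund \<phi> i = fund \<phi> j) \<longrightarrow>
        Topt d \<phi> \<le> Tseq d \<phi> (alpha d) \<and> Tseq d \<phi> (alpha d) \<le> ennreal c * Topt d \<phi>)"
proof (rule exI[of _ 39], rule conjI)
  show "(39::real) > 0" by simp
  show "\<forall>(d::nat) \<phi>.
        d \<ge> 2 \<longrightarrow> configuration d \<phi> \<longrightarrow>
        (\<forall>i\<in>{1..d}. summable (fund \<phi> i)) \<longrightarrow>
        (\<forall>i\<in>{1..d}. \<forall>j\<in>{1..d}. fund \<phi> i = fund \<phi> j) \<longrightarrow>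
        Topt d \<phi> \<le> Tseq d \<phi> (alpha d) \<and> Tseq d \<phi> (alpha d) \<le> ennreal 39 * Topt d \<phi>"
  proof (intro allI impI)
    fix d :: nat and \<phi> :: "nat \<Rightarrow> nat set list \<Rightarrow> real"
    assume d2: "2 \<le> d" and cfg: "configuration d \<phi>" and sm: "\<forall>i\<in>{1..d}. summable (fund \<phi> i)"
      and eq: "\<forall>i\<in>{1..d}. \<forall>j\<in>{1..d}. fund \<phi> i = fund \<phi> j"
    have d1: "1 \<le> d" using d2 by simp
    have feq: "\<forall>i\<in>{1..d}. fund \<phi> i = fund \<phi> 1"
    proof
      fix i assume "i \<in> {1..d}"
      moreover have "(1::nat) \<in> {1..d}" using d1 by simp
      ultimately show "fund \<phi> i = fund \<phi> 1" using eq by blast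
    qed
    show "Topt d \<phi> \<le> Tseq d \<phi> (alpha d) \<and> Tseq d \<phi> (alpha d) \<le> ennreal 39 * Topt d \<phi>"
      by (rule final_bounds[OF cfg d1 feq])
  qed
qed


end
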